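(* Let $n>1$ be an integer and $D_n=\{f\in C([0,1];M_n): f(0)\text{ and }f(1)\text{ are scalar matrices}\}$. Then $TC(D_n)=\infty$.
   Context: All tensor products are minimal. For a unital $C^*$-algebra $A$ let $p_0,p_1:A\to A\otimes A$ be $p_0(a)=a\otimes 1$, $p_1(a)=1\otimes a$, and for $t\in[0,1]$ and a $C^*$-algebra $B$ let $\mathrm{ev}_t:B\otimes C[0,1]\to B$ be evaluation at $t$. The topological complexity $TC(A)$ is the minimal number $n$ such that there exist $C^*$-algebras $B_1,\dots,B_n$ with surjective $*$-homomorphisms $q_i:A\otimes A\to B_i$ satisfying $\bigcap_{i=1}^n\ker q_i=\{0\}$, together with $*$-homomorphisms $\sigma_i:A\to B_i\otimes C[0,1]$ such that $\mathrm{ev}_k\circ\sigma_i=q_i\circ p_k$ for $k=0,1$ and all $i$; $TC(A)=\infty$ if no such $n$ exists. *)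

theory Defs
  imports "HOL-Analysis.Analysis"
begin

record 'a cstar =
  cs_carrier :: "'a set"
  cs_zero :: 'a
  cs_add :: "'a \<Rightarrow> 'a \<Rightarrow> 'a"
  cs_smult :: "complex \<Rightarrow> 'a \<Rightarrow> 'a"
  cs_mult :: "'a \<Rightarrow> 'a \<Rightarrow> 'a"
  cs_star :: "'a \<Rightarrow> 'a"
  cs_norm :: "'a \<Rightarrow> real"

definition cs_sub :: "'a cstar \<Rightarrow> 'a \<Rightarrow> 'a \<Rightarrow> 'a" where
  "cs_sub A x y = cs_add A x (cs_smult A (-1) y)"

definition is_cstar_algebra :: "'a cstar \<Rightarrow> bool" where
  "is_cstar_algebra A \<longleftrightarrow>
     (let C = cs_carrier A; z = cs_zero A; add = cs_add A; sm = cs_smult A;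
          mul = cs_mult A; st = cs_star A; nr = cs_norm A in
     \<comment> \<open>closure\<close>
     z \<in> C \<and>
     (\<forall>x\<in>C. \<forall>y\<in>C. add x y \<in> C \<and> mul x y \<in> C) \<and>
     (\<forall>c. \<forall>x\<in>C. sm c x \<in> C) \<and>
     (\<forall>x\<in>C. st x \<in> C) \<and>
     \<comment> \<open>complex vector space\<close>
     (\<forall>x\<in>C. \<forall>y\<in>C. \<forall>w\<in>C. add (add x y) w = add x (add y w)) \<and>
     (\<forall>x\<in>C. \<forall>y\<in>C. add x y = add y x) \<and>
     (\<forall>x\<in>C. add z x = x) \<and>
     (\<forall>x\<in>C. \<exists>y\<in>C. add x y = z) \<and>
     (\<forall>x\<in>C. sm 1 x = x) \<and>
     (\<forall>a b. \<forall>x\<in>C. sm (a * b) x = sm a (sm b x)) \<and>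
     (\<forall>a. \<forall>x\<in>C. \<forall>y\<in>C. sm a (add x y) = add (sm a x) (sm a y)) \<and>
     (\<forall>a b. \<forall>x\<in>C. sm (a + b) x = add (sm a x) (sm b x)) \<and>
     \<comment> \<open>algebra\<close>
     (\<forall>x\<in>C. \<forall>y\<in>C. \<forall>w\<in>C. mul (mul x y) w = mul x (mul y w)) \<and>
     (\<forall>x\<in>C. \<forall>y\<in>C. \<forall>w\<in>C. mul x (add y w) = add (mul x y) (mul x w)) \<and>
     (\<forall>x\<in>C. \<forall>y\<in>C. \<forall>w\<in>C. mul (add x y) w = add (mul x w) (mul y w)) \<and>
     (\<forall>a. \<forall>x\<in>C. \<forall>y\<in>C. sm a (mul x y) = mul (sm a x) y \<and> sm a (mul x y) = mul x (sm a y)) \<and>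
     \<comment> \<open>involution\<close>
     (\<forall>x\<in>C. st (st x) = x) \<and>
     (\<forall>x\<in>C. \<forall>y\<in>C. st (add x y) = add (st x) (st y)) \<and>
     (\<forall>a. \<forall>x\<in>C. st (sm a x) = sm (cnj a) (st x)) \<and>
     (\<forall>x\<in>C. \<forall>y\<in>C. st (mul x y) = mul (st y) (st x)) \<and>
     \<comment> \<open>norm\<close>
     (\<forall>x\<in>C. 0 \<le> nr x \<and> (nr x = 0 \<longleftrightarrow> x = z)) \<and>
     (\<forall>x\<in>C. \<forall>y\<in>C. nr (add x y) \<le> nr x + nr y) \<and>
     (\<forall>a. \<forall>x\<in>C. nr (sm a x) = cmod a * nr x) \<and>
     (\<forall>x\<in>C. \<forall>y\<in>C. nr (mul x y) \<le> nr x * nr y) \<and>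
     (\<forall>x\<in>C. nr (mul (st x) x) = (nr x)\<^sup>2) \<and>
     \<comment> \<open>completeness\<close>
     (\<forall>X::nat \<Rightarrow> 'a. (\<forall>k. X k \<in> C) \<longrightarrow>
        (\<forall>e>0. \<exists>N. \<forall>k\<ge>N. \<forall>l\<ge>N. nr (cs_sub A (X k) (X l)) < e) \<longrightarrow>
        (\<exists>L\<in>C. \<forall>e>0. \<exists>N. \<forall>k\<ge>N. nr (cs_sub A (X k) L) < e)))"

definition is_star_hom :: "'a cstar \<Rightarrow> 'b cstar \<Rightarrow> ('a \<Rightarrow> 'b) \<Rightarrow> bool" where
  "is_star_hom A B f \<longleftrightarrow>
     (\<forall>x\<in>cs_carrier A. f x \<in> cs_carrier B) \<and>
     (\<forall>x\<in>cs_carrier A. \<forall>y\<in>cs_carrier A. f (cs_add A x y) = cs_add B (f x) (f y)) \<and>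
     (\<forall>c. \<forall>x\<in>cs_carrier A. f (cs_smult A c x) = cs_smult B c (f x)) \<and>
     (\<forall>x\<in>cs_carrier A. \<forall>y\<in>cs_carrier A. f (cs_mult A x y) = cs_mult B (f x) (f y)) \<and>
     (\<forall>x\<in>cs_carrier A. f (cs_star A x) = cs_star B (f x))"

text \<open>B \<otimes> C[0,1], realised as the C*-algebra C([0,1], B) of norm-continuous
  B-valued functions on [0,1] (extended by zero outside [0,1]); ev_t is evaluation at t.\<close>

definition path_alg :: "'b cstar \<Rightarrow> (real \<Rightarrow> 'b) cstar" where
  "path_alg B =
    \<lparr> cs_carrier = {s. (\<forall>t\<in>{0..1}. s t \<in> cs_carrier B) \<and> (\<forall>t. t \<notin> {0..1} \<longrightarrow> s t = cs_zero B) \<and>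
        (\<forall>t\<in>{0..1}. \<forall>e>0. \<exists>d>0. \<forall>u\<in>{0..1}. \<bar>u - t\<bar> < d \<longrightarrow> cs_norm B (cs_sub B (s u) (s t)) < e)},
      cs_zero = (\<lambda>_. cs_zero B),
      cs_add = (\<lambda>s r t. cs_add B (s t) (r t)),
      cs_smult = (\<lambda>c s t. cs_smult B c (s t)),
      cs_mult = (\<lambda>s r t. cs_mult B (s t) (r t)),
      cs_star = (\<lambda>s t. cs_star B (s t)),
      cs_norm = (\<lambda>s. Sup ((\<lambda>t. cs_norm B (s t)) ` {0..1})) \<rparr>"

definition mstar :: "complex^'n^'n \<Rightarrow> complex^'n^'n" where
  "mstar M = (\<chi> i j. cnj (M $ j $ i))"

definition msmult :: "complex \<Rightarrow> complex^'n^'n \<Rightarrow> complex^'n^'n" where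
  "msmult c M = (\<chi> i j. c * M $ i $ j)"

definition mnorm :: "complex^'n^'n \<Rightarrow> real" where
  "mnorm M = onorm (\<lambda>x. M *v x)"

text \<open>Kronecker product: M_n \<otimes> M_n = M_{n^2} (spatial tensor product).\<close>
definition kron :: "complex^'n^'n \<Rightarrow> complex^'n^'n \<Rightarrow> complex^('n::finite\<times>'n)^('n\<times>'n)" where
  "kron A B = (\<chi> p q. A $ fst p $ fst q * B $ snd p $ snd q)"

definition mfun_alg :: "'x set \<Rightarrow> ('x \<Rightarrow> complex^'m^'m) set \<Rightarrow> ('x \<Rightarrow> complex^'m^'m) cstar" where
  "mfun_alg X S =
    \<lparr> cs_carrier = S,
      cs_zero = (\<lambda>_. 0),
      cs_add = (\<lambda>f g x. f x + g x),
      cs_smult = (\<lambda>c f x. msmult c (f x)),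
      cs_mult = (\<lambda>f g x. f x ** g x),
      cs_star = (\<lambda>f x. mstar (f x)),
      cs_norm = (\<lambda>f. Sup ((\<lambda>x. mnorm (f x)) ` X)) \<rparr>"

definition Dn_set :: "(real \<Rightarrow> complex^'n^'n) set" where
  "Dn_set = {f. continuous_on {0..1} f \<and> (\<forall>t. t \<notin> {0..1} \<longrightarrow> f t = 0) \<and>
                (\<exists>c. f 0 = mat c) \<and> (\<exists>c. f 1 = mat c)}"

definition Dn :: "(real \<Rightarrow> complex^'n^'n) cstar" where
  "Dn = mfun_alg {0..1} Dn_set"

abbreviation unit_square :: "(real \<times> real) set" where
  "unit_square \<equiv> {0..1} \<times> {0..1}"

text \<open>D_n \<otimes> D_n (minimal tensor product) realised inside C([0,1]^2, M_n \<otimes> M_n):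
  the uniform closure of the span of the elementary tensors (s,t) \<mapsto> f(s) \<otimes> g(t).\<close>
definition DnDn_set :: "(real \<times> real \<Rightarrow> complex^('n::finite\<times>'n)^('n\<times>'n)) set" where
  "DnDn_set = {F. (\<forall>p. p \<notin> unit_square \<longrightarrow> F p = 0) \<and>
      (\<forall>e>0. \<exists>(k::nat) (fs :: nat \<Rightarrow> real \<Rightarrow> complex^'n^'n) gs.
          (\<forall>i<k. fs i \<in> Dn_set \<and> gs i \<in> Dn_set) \<and>
          (\<forall>p\<in>unit_square. mnorm (F p - (\<Sum>i<k. kron (fs i (fst p)) (gs i (snd p)))) < e))}"

definition DnDn :: "(real \<times> real \<Rightarrow> complex^('n::finite\<times>'n)^('n\<times>'n)) cstar" where
  "DnDn = mfun_alg unit_square DnDn_set"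

definition p0 :: "(real \<Rightarrow> complex^'n^'n) \<Rightarrow> real \<times> real \<Rightarrow> complex^('n::finite\<times>'n)^('n\<times>'n)" where
  "p0 a = (\<lambda>p. if p \<in> unit_square then kron (a (fst p)) (mat 1) else 0)"

definition p1 :: "(real \<Rightarrow> complex^'n^'n) \<Rightarrow> real \<times> real \<Rightarrow> complex^('n::finite\<times>'n)^('n\<times>'n)" where
  "p1 a = (\<lambda>p. if p \<in> unit_square then kron (mat 1) (a (snd p)) else 0)"

text \<open>Data witnessing TC(A) \<le> m, given A, A \<otimes> A and p_0, p_1.\<close>
definition TC_data ::
  "'a cstar \<Rightarrow> 'aa cstar \<Rightarrow> ('a \<Rightarrow> 'aa) \<Rightarrow> ('a \<Rightarrow> 'aa) \<Rightarrow> nat \<Rightarrow>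
   (nat \<Rightarrow> 'b cstar) \<Rightarrow> (nat \<Rightarrow> 'aa \<Rightarrow> 'b) \<Rightarrow> (nat \<Rightarrow> 'a \<Rightarrow> real \<Rightarrow> 'b) \<Rightarrow> bool" where
  "TC_data A AA q0 q1 m B q \<sigma> \<longleftrightarrow>
     (\<forall>i<m. is_cstar_algebra (B i) \<and>
            is_star_hom AA (B i) (q i) \<and> q i ` cs_carrier AA = cs_carrier (B i) \<and>
            is_star_hom A (path_alg (B i)) (\<sigma> i) \<and>
            (\<forall>a\<in>cs_carrier A. \<sigma> i a 0 = q i (q0 a) \<and> \<sigma> i a 1 = q i (q1 a))) \<and>
     (\<forall>x\<in>cs_carrier AA. (\<forall>i<m. q i x = cs_zero (B i)) \<longrightarrow> x = cs_zero AA)"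

end

theory Submission
  imports Defs
begin
lemma geo_step: "(r::real) < 1 \<Longrightarrow> a * D + D * (b - a) / (1 - r) = D * (b - r * a) / (1 - r)"
  by (simp add: field_simps)

locale csa =
  fixes A :: "'a cstar"
  assumes csa: "is_cstar_algebra A"
begin

abbreviation "CC \<equiv> cs_carrier A"
abbreviation "zz \<equiv> cs_zero A"
abbreviation "ad \<equiv> cs_add A"
abbreviation "sm \<equiv> cs_smult A"
abbreviation "mu \<equiv> cs_mult A"
abbreviation "nr \<equiv> cs_norm A"

lemma H: "zz \<in> CC"
  "(\<forall>x\<in>CC. \<forall>y\<in>CC. ad x y \<in> CC \<and> mu x y \<in> CC)"
  "(\<forall>c. \<forall>x\<in>CC. sm c x \<in> CC)"
  "(\<forall>x\<in>CC. \<forall>y\<in>CC. \<forall>w\<in>CC. ad (ad x y) w = ad x (ad y w))"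
  "(\<forall>x\<in>CC. \<forall>y\<in>CC. ad x y = ad y x)"
  "(\<forall>x\<in>CC. ad zz x = x)"
  "(\<forall>x\<in>CC. \<exists>y\<in>CC. ad x y = zz)"
  "(\<forall>x\<in>CC. sm 1 x = x)"
  "(\<forall>a b. \<forall>x\<in>CC. sm (a * b) x = sm a (sm b x))"
  "(\<forall>a. \<forall>x\<in>CC. \<forall>y\<in>CC. sm a (ad x y) = ad (sm a x) (sm a y))"
  "(\<forall>a b. \<forall>x\<in>CC. sm (a + b) x = ad (sm a x) (sm b x))"
  "(\<forall>x\<in>CC. \<forall>y\<in>CC. \<forall>w\<in>CC. mu x (ad y w) = ad (mu x y) (mu x w))"
  "(\<forall>x\<in>CC. \<forall>y\<in>CC. \<forall>w\<in>CC. mu (ad x y) w = ad (mu x w) (mu y w))"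
  "(\<forall>a. \<forall>x\<in>CC. \<forall>y\<in>CC. sm a (mu x y) = mu (sm a x) y \<and> sm a (mu x y) = mu x (sm a y))"
  "(\<forall>x\<in>CC. 0 \<le> nr x \<and> (nr x = 0 \<longleftrightarrow> x = zz))"
  "(\<forall>x\<in>CC. \<forall>y\<in>CC. nr (ad x y) \<le> nr x + nr y)"
  "(\<forall>a. \<forall>x\<in>CC. nr (sm a x) = cmod a * nr x)"
  "(\<forall>x\<in>CC. \<forall>y\<in>CC. nr (mu x y) \<le> nr x * nr y)"
  apply (insert csa[unfolded is_cstar_algebra_def Let_def])
  apply (elim conjE; assumption)+
  done

lemma ax: "zz \<in> CC"
  "\<And>x y. x \<in> CC \<Longrightarrow> y \<in> CC \<Longrightarrow> ad x y \<in> CC"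
  "\<And>x y. x \<in> CC \<Longrightarrow> y \<in> CC \<Longrightarrow> mu x y \<in> CC"
  "\<And>c x. x \<in> CC \<Longrightarrow> sm c x \<in> CC"
  "\<And>x y w. x \<in> CC \<Longrightarrow> y \<in> CC \<Longrightarrow> w \<in> CC \<Longrightarrow> ad (ad x y) w = ad x (ad y w)"
  "\<And>x y. x \<in> CC \<Longrightarrow> y \<in> CC \<Longrightarrow> ad x y = ad y x"
  "\<And>x. x \<in> CC \<Longrightarrow> ad zz x = x"
  "\<And>x. x \<in> CC \<Longrightarrow> \<exists>y\<in>CC. ad x y = zz"
  "\<And>x. x \<in> CC \<Longrightarrow> sm 1 x = x"
  "\<And>a b x. x \<in> CC \<Longrightarrow> sm (a * b) x = sm a (sm b x)"
  "\<And>a x y. x \<in> CC \<Longrightarrow> y \<in> CC \<Longrightarrow> sm a (ad x y) = ad (sm a x) (sm a y)"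
  "\<And>a b x. x \<in> CC \<Longrightarrow> sm (a + b) x = ad (sm a x) (sm b x)"
  "\<And>x y w. x \<in> CC \<Longrightarrow> y \<in> CC \<Longrightarrow> w \<in> CC \<Longrightarrow> mu x (ad y w) = ad (mu x y) (mu x w)"
  "\<And>x y w. x \<in> CC \<Longrightarrow> y \<in> CC \<Longrightarrow> w \<in> CC \<Longrightarrow> mu (ad x y) w = ad (mu x w) (mu y w)"
  "\<And>a x y. x \<in> CC \<Longrightarrow> y \<in> CC \<Longrightarrow> sm a (mu x y) = mu x (sm a y)"
  "\<And>x. x \<in> CC \<Longrightarrow> 0 \<le> nr x"
  "\<And>x. x \<in> CC \<Longrightarrow> nr x = 0 \<longleftrightarrow> x = zz"
  "\<And>x y. x \<in> CC \<Longrightarrow> y \<in> CC \<Longrightarrow> nr (ad x y) \<le> nr x + nr y"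
  "\<And>a x. x \<in> CC \<Longrightarrow> nr (sm a x) = cmod a * nr x"
  "\<And>x y. x \<in> CC \<Longrightarrow> y \<in> CC \<Longrightarrow> nr (mu x y) \<le> nr x * nr y"
  using H(1) apply blast
  using H(2) apply blast
  using H(2) apply blast
  using H(3) apply blast
  using H(4) apply blast
  using H(5) apply blast
  using H(6) apply blast
  using H(7) apply blast
  using H(8) apply blast
  using H(9) apply blast
  using H(10) apply blast
  using H(11) apply blast
  using H(12) apply blast
  using H(13) apply blast
  using H(14) apply blast
  using H(15) apply blast
  using H(15) apply blast
  using H(16) apply blast
  using H(17) apply blast
  using H(18) apply blast
  done

lemma complete:
  fixes X :: "nat \<Rightarrow> 'a"
  assumes "\<forall>k. X k \<in> CC" "\<forall>e>0. \<exists>N. \<forall>k\<ge>N. \<forall>l\<ge>N. nr (cs_sub A (X k) (X l)) < e"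
  shows "\<exists>L\<in>CC. \<forall>e>0. \<exists>N. \<forall>k\<ge>N. nr (cs_sub A (X k) L) < e"
proof -
  have "\<forall>X::nat \<Rightarrow> 'a. (\<forall>k. X k \<in> CC) \<longrightarrow>
        (\<forall>e>0. \<exists>N. \<forall>k\<ge>N. \<forall>l\<ge>N. nr (cs_sub A (X k) (X l)) < e) \<longrightarrow>
        (\<exists>L\<in>CC. \<forall>e>0. \<exists>N. \<forall>k\<ge>N. nr (cs_sub A (X k) L) < e)"
    using csa unfolding is_cstar_algebra_def Let_def by (elim conjE) assumption
  from mp[OF mp[OF spec[OF this, of X] assms(1)] assms(2)] show ?thesis .
qed

lemma add_zero: "x \<in> CC \<Longrightarrow> ad x zz = x"
  using ax(6)[OF _ ax(1), of x] ax(7)[of x] by simp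

lemma sm_zero: assumes x: "x \<in> CC" shows "sm 0 x = zz"
proof -
  let ?s = "sm 0 x"
  have s: "?s \<in> CC" using ax x by blast
  have ss: "?s = ad ?s ?s" using ax(12)[OF x, of 0 0] by simp
  obtain y where y: "y \<in> CC" "ad ?s y = zz" using ax(8)[OF s] by blast
  have "zz = ad (ad ?s ?s) y" using ss y by simp
  also have "\<dots> = ad ?s zz" using ax(5)[OF s s y(1)] y by simp
  also have "\<dots> = ?s" using add_zero s by blast
  finally show ?thesis by simp
qed

lemma add_neg: "x \<in> CC \<Longrightarrow> ad x (sm (-1) x) = zz"
  using ax(12)[of x 1 "-1"] ax(9)[of x] sm_zero[of x] by simp

lemma neg_add: "x \<in> CC \<Longrightarrow> ad (sm (-1) x) x = zz"
  using add_neg[of x] ax(6)[OF _ ax(4), of x x "-1"] by simp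

lemma cancel: assumes "a \<in> CC" "b \<in> CC" "c \<in> CC" "ad a b = ad a c" shows "b = c"
proof -
  have na: "sm (-1) a \<in> CC" using ax assms by blast
  have "b = ad (ad (sm (-1) a) a) b" using neg_add[OF assms(1)] ax(7)[OF assms(2)] by simp
  also have "\<dots> = ad (sm (-1) a) (ad a b)" using ax(5) na assms by blast
  also have "\<dots> = ad (sm (-1) a) (ad a c)" using assms by simp
  also have "\<dots> = ad (ad (sm (-1) a) a) c" using ax(5)[OF na assms(1) assms(3)] by simp
  also have "\<dots> = c" using neg_add[OF assms(1)] ax(7)[OF assms(3)] by simp
  finally show ?thesis .
qed

lemma mul_zero_l: assumes y: "y \<in> CC" shows "mu zz y = zz"
proof -
  have m: "mu zz y \<in> CC" using ax y by blast
  have "mu zz y = ad (mu zz y) (mu zz y)" using ax(14)[OF ax(1) ax(1) y] ax(7)[OF ax(1)] by simp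
  hence "ad (mu zz y) zz = ad (mu zz y) (mu zz y)" using add_zero m by simp
  thus ?thesis using cancel[OF m ax(1) m] by simp
qed

lemma mul_zero_r: assumes y: "y \<in> CC" shows "mu y zz = zz"
proof -
  have m: "mu y zz \<in> CC" using ax y by blast
  have "mu y zz = ad (mu y zz) (mu y zz)" using ax(13)[OF y ax(1) ax(1)] ax(7)[OF ax(1)] by simp
  hence "ad (mu y zz) zz = ad (mu y zz) (mu y zz)" using add_zero m by simp
  thus ?thesis using cancel[OF m ax(1) m] by simp
qed

abbreviation "sb \<equiv> cs_sub A"

lemma sb: "sb x y = ad x (sm (-1) y)" by (simp add: cs_sub_def)

lemma sb_in: "x \<in> CC \<Longrightarrow> y \<in> CC \<Longrightarrow> sb x y \<in> CC"
  by (simp add: sb ax(2) ax(4))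

lemma sb_trans: assumes "a \<in> CC" "b \<in> CC" "c \<in> CC"
  shows "sb a c = ad (sb a b) (sb b c)"
proof -
  have nb: "sm (-1) b \<in> CC" and nc: "sm (-1) c \<in> CC" using ax assms by blast+
  have "ad (sb a b) (sb b c) = ad (ad a (sm (-1) b)) (ad b (sm (-1) c))" by (simp add: sb)
  also have "\<dots> = ad a (ad (sm (-1) b) (ad b (sm (-1) c)))" using ax(5)[OF assms(1) nb ax(2)[OF assms(2) nc]] by simp
  also have "\<dots> = ad a (ad (ad (sm (-1) b) b) (sm (-1) c))" using ax(5)[OF nb assms(2) nc] by simp
  also have "\<dots> = ad a (sm (-1) c)" using neg_add[OF assms(2)] ax(7)[OF nc] by simp
  finally show ?thesis by (simp add: sb)
qed

lemma nr_sb_tri: assumes "a \<in> CC" "b \<in> CC" "c \<in> CC"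
  shows "nr (sb a c) \<le> nr (sb a b) + nr (sb b c)"
  using sb_trans[OF assms] ax(18)[OF sb_in[OF assms(1,2)] sb_in[OF assms(2,3)]] by simp

lemma sb_swap: assumes "a \<in> CC" "b \<in> CC" shows "sb b a = sm (-1) (sb a b)"
proof -
  have na: "sm (-1) a \<in> CC" and nb: "sm (-1) b \<in> CC" using ax assms by blast+
  have "sm (-1) (sb a b) = ad (sm (-1) a) (sm (-1) (sm (-1) b))" using ax(11) assms nb by (simp add: sb)
  also have "\<dots> = ad (sm (-1) a) b" using ax(10)[of b "-1" "-1"] ax(9) assms by simp
  also have "\<dots> = sb b a" using ax(6) na assms by (simp add: sb)
  finally show ?thesis by simp
qed

lemma nr_sb_sym: assumes "a \<in> CC" "b \<in> CC" shows "nr (sb b a) = nr (sb a b)"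
  using sb_swap[OF assms] ax(19) sb_in[OF assms] by simp

lemma mu_sb: assumes "x \<in> CC" "a \<in> CC" "b \<in> CC" shows "mu x (sb a b) = sb (mu x a) (mu x b)"
  using ax(13)[OF assms(1,2), of "sm (-1) b"] ax(15)[OF assms(1,3), of "-1"] ax(4) assms by (simp add: sb)

lemma sb_add_cancel: assumes "x \<in> CC" "u \<in> CC" "v \<in> CC"
  shows "sb (ad x u) (ad x v) = sb u v"
proof -
  have nx: "sm (-1) x \<in> CC" and nv: "sm (-1) v \<in> CC" using ax assms by blast+
  have "sb (ad x u) (ad x v) = ad (ad x u) (ad (sm (-1) x) (sm (-1) v))" using ax(11) assms by (simp add: sb)
  also have "\<dots> = ad (ad u x) (ad (sm (-1) x) (sm (-1) v))" using ax(6)[OF assms(1,2)] by simp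
  also have "\<dots> = ad u (ad x (ad (sm (-1) x) (sm (-1) v)))" using ax(5)[OF assms(2,1) ax(2)[OF nx nv]] by simp
  also have "\<dots> = ad u (ad (ad x (sm (-1) x)) (sm (-1) v))" using ax(5)[OF assms(1) nx nv] by simp
  also have "\<dots> = ad u (sm (-1) v)" using add_neg[OF assms(1)] ax(7)[OF nv] by simp
  finally show ?thesis by (simp add: sb)
qed

lemma sb_self: "a \<in> CC \<Longrightarrow> sb a a = zz"
  by (simp add: sb add_neg)

lemma neumann:
  fixes \<psi> :: "'a \<Rightarrow> complex"
  assumes padd: "\<And>x y. x \<in> CC \<Longrightarrow> y \<in> CC \<Longrightarrow> \<psi> (ad x y) = \<psi> x + \<psi> y"
    and pmul: "\<And>x y. x \<in> CC \<Longrightarrow> y \<in> CC \<Longrightarrow> \<psi> (mu x y) = \<psi> x * \<psi> y"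
    and pneg: "\<And>x. x \<in> CC \<Longrightarrow> \<psi> (sm (-1) x) = - \<psi> x"
    and x: "x \<in> CC" "nr x < 1" "\<psi> x = 1"
  shows False
proof -
  have psb: "\<psi> (sb a b) = \<psi> a - \<psi> b" if "a \<in> CC" "b \<in> CC" for a b
    using padd[OF that(1) ax(4)[OF that(2)]] pneg[OF that(2)] by (simp add: sb)
  have pz: "\<psi> zz = 0"
    using padd[OF ax(1) ax(1)] ax(7)[OF ax(1)] by simp
  define T where "T = rec_nat zz (\<lambda>_ t. ad x (mu x t))"
  have T0: "T 0 = zz" and TS: "\<And>n. T (Suc n) = ad x (mu x (T n))" by (simp_all add: T_def)
  have Tin: "T n \<in> CC" for n
    by (induction n) (simp_all add: T0 TS ax(1) ax(2) ax(3) x(1))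
  define r where "r = nr x"
  have r0: "0 \<le> r" and r1: "r < 1" using ax(16)[OF x(1)] x(2) by (simp_all add: r_def)
  define D where "D = nr (sb (T 1) (T 0))"
  have D0: "0 \<le> D" unfolding D_def by (rule ax(16)[OF sb_in[OF Tin Tin]])
  have step: "sb (T (Suc (Suc n))) (T (Suc n)) = mu x (sb (T (Suc n)) (T n))" for n
  proof -
    have "sb (T (Suc (Suc n))) (T (Suc n)) = sb (ad x (mu x (T (Suc n)))) (ad x (mu x (T n)))"
      by (rule arg_cong2[where f=sb]; rule TS)
    also have "\<dots> = sb (mu x (T (Suc n))) (mu x (T n))"
      by (rule sb_add_cancel[OF x(1) ax(3)[OF x(1) Tin] ax(3)[OF x(1) Tin]])
    also have "\<dots> = mu x (sb (T (Suc n)) (T n))" by (rule mu_sb[OF x(1) Tin Tin, symmetric])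
    finally show ?thesis .
  qed
  have dbound: "nr (sb (T (Suc n)) (T n)) \<le> r ^ n * D" for n
  proof (induction n)
    case 0 show ?case by (simp add: D_def)
  next
    case (Suc n)
    have "nr (sb (T (Suc (Suc n))) (T (Suc n))) \<le> r * nr (sb (T (Suc n)) (T n))"
      unfolding step r_def by (rule ax(20)[OF x(1) sb_in[OF Tin Tin]])
    also have "\<dots> \<le> r * (r ^ n * D)" using Suc r0 by (simp add: mult_left_mono)
    finally show ?case by simp
  qed
  have c1: "nr (sb (T (l + d)) (T l)) \<le> D * (r ^ l - r ^ (l + d)) / (1 - r)" for l d
  proof (induction d)
    case 0 show ?case using ax(17)[OF ax(1)] by (simp add: sb_self Tin)
  next
    case (Suc d)
    have "nr (sb (T (l + Suc d)) (T l)) \<le> nr (sb (T (Suc (l + d))) (T (l + d))) + nr (sb (T (l + d)) (T l))"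
      using nr_sb_tri[OF Tin Tin Tin] by simp
    also have "\<dots> \<le> r ^ (l + d) * D + D * (r ^ l - r ^ (l + d)) / (1 - r)"
      using dbound Suc by (intro add_mono) auto
    also have "\<dots> = D * (r ^ l - r ^ (l + Suc d)) / (1 - r)"
      using geo_step[OF r1, of "r ^ (l + d)" D "r ^ l"] by (simp add: mult.commute)
    finally show ?case .
  qed
  have c2: "nr (sb (T k) (T l)) \<le> D * r ^ l / (1 - r)" if "l \<le> k" for k l
  proof -
    define d where "d = k - l"
    have k: "k = l + d" using that by (simp add: d_def)
    have "0 \<le> r ^ (l + d)" using r0 by simp
    hence "r ^ l - r ^ (l + d) \<le> r ^ l" by simp
    hence "D * (r ^ l - r ^ (l + d)) \<le> D * r ^ l" using D0 by (rule mult_left_mono)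
    hence "D * (r ^ l - r ^ (l + d)) / (1 - r) \<le> D * r ^ l / (1 - r)"
      using r1 by (intro divide_right_mono) simp_all
    thus ?thesis using c1[of l d] unfolding k by linarith
  qed
  have cauchy: "\<forall>e>0. \<exists>N. \<forall>k\<ge>N. \<forall>l\<ge>N. nr (sb (T k) (T l)) < e"
  proof (intro allI impI)
    fix e :: real assume e: "e > 0"
    have "(\<lambda>n. D / (1 - r) * r ^ n) \<longlonglongrightarrow> D / (1 - r) * 0"
      using r0 r1 by (intro tendsto_mult tendsto_const LIMSEQ_power_zero) auto
    hence "\<forall>\<^sub>F n in sequentially. D / (1 - r) * r ^ n < e" using e by (simp add: order_tendsto_iff)
    then obtain N where N: "\<And>n. n \<ge> N \<Longrightarrow> D / (1 - r) * r ^ n < e"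
      by (auto simp: eventually_sequentially)
    have "nr (sb (T k) (T l)) < e" if "k \<ge> N" "l \<ge> N" for k l
    proof (cases "l \<le> k")
      case True
      have "D * r ^ l / (1 - r) < e" using N[OF that(2)] by simp
      thus ?thesis using c2[OF True] by simp
    next
      case False
      have "D * r ^ k / (1 - r) < e" using N[OF that(1)] by simp
      thus ?thesis using c2[of k l] False nr_sb_sym[OF Tin Tin, of k l] by simp
    qed
    thus "\<exists>N. \<forall>k\<ge>N. \<forall>l\<ge>N. nr (sb (T k) (T l)) < e" by blast
  qed
  obtain L where L: "L \<in> CC" and Lc: "\<forall>e>0. \<exists>N. \<forall>k\<ge>N. nr (sb (T k) L) < e"
    using complete[of T] Tin cauchy by blast
  define E where "E = sb L (ad x (mu x L))"
  have xL: "ad x (mu x L) \<in> CC" using ax(2) ax(3) x(1) L by blast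
  have Ein: "E \<in> CC" unfolding E_def using sb_in L xL by blast
  have Esmall: "nr E < e" if e: "e > 0" for e
  proof -
    obtain N where N: "\<And>k. k \<ge> N \<Longrightarrow> nr (sb (T k) L) < e / 2" using Lc e
      by (meson half_gt_zero)
    have "nr E \<le> nr (sb L (T (Suc N))) + nr (sb (T (Suc N)) (ad x (mu x L)))"
      unfolding E_def by (rule nr_sb_tri[OF L Tin xL])
    also have "sb (T (Suc N)) (ad x (mu x L)) = mu x (sb (T N) L)"
      unfolding TS[of N] by (simp add: sb_add_cancel x(1) ax(3) Tin L mu_sb)
    also have "nr (sb L (T (Suc N))) = nr (sb (T (Suc N)) L)" by (rule nr_sb_sym[OF Tin L])
    also have "nr (mu x (sb (T N) L)) \<le> r * nr (sb (T N) L)"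
      unfolding r_def by (rule ax(20)[OF x(1) sb_in[OF Tin L]])
    also have "\<dots> \<le> nr (sb (T N) L)" using r1 r0 ax(16)[OF sb_in[OF Tin L, of N]]
      by (simp add: mult_left_le_one_le)
    finally have "nr E \<le> nr (sb (T (Suc N)) L) + nr (sb (T N) L)" by simp
    thus ?thesis using N[of N] N[of "Suc N"] by simp
  qed
  have "nr E = 0"
  proof (rule ccontr)
    assume "nr E \<noteq> 0"
    hence "nr E > 0" using ax(16)[OF Ein] by simp
    thus False using Esmall[of "nr E"] by simp
  qed
  hence "E = zz" using ax(17)[OF Ein] by simp
  hence "\<psi> E = 0" using pz by simp
  moreover have "\<psi> E = -1"
    unfolding E_def using psb[OF L xL] padd[OF x(1) ax(3)[OF x(1) L]] pmul[OF x(1) L] x(3) by simp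
  ultimately show False by simp
qed

end

lemma mvm_bl: "bounded_linear (\<lambda>x. (M::complex^'m^'k) *v x)"
  using matrix_vector_mul_bounded_linear[of M] by simp

lemma norm_axis_c: "norm (axis (j::'m::finite) (1::complex)) = 1"
proof -
  have "(\<Sum>i\<in>UNIV. (norm (axis j (1::complex) $ i))\<^sup>2) = (\<Sum>i\<in>UNIV. if i = j then 1 else 0)"
    by (rule sum.cong) (auto simp: axis_def)
  also have "\<dots> = 1" by simp
  finally show ?thesis by (simp add: norm_vec_def L2_set_def)
qed

lemma mnorm_nonneg: "0 \<le> mnorm M"
  unfolding mnorm_def by (rule onorm_pos_le[OF mvm_bl])

lemma mnorm_zero: "mnorm (0::complex^'m^'m) = 0"
proof -
  have "(*v) (0::complex^'m^'m) = (\<lambda>x. 0)" by (rule ext) simp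
  thus ?thesis unfolding mnorm_def by (simp add: onorm_zero)
qed

lemma mnorm_entry: "cmod (M $ i $ j) \<le> mnorm (M::complex^'m::finite^'m)"
proof -
  have "(M *v axis j 1) $ i = M $ i $ j"
    by (simp add: matrix_vector_mult_def axis_def if_distrib cong: if_cong)
  hence "cmod (M $ i $ j) \<le> norm (M *v axis j 1)" using Finite_Cartesian_Product.norm_nth_le by metis
  also have "\<dots> \<le> mnorm M * norm (axis j (1::complex))"
    unfolding mnorm_def by (rule onorm[OF mvm_bl])
  finally show ?thesis by (simp add: norm_axis_c)
qed

lemma mnorm_add: "mnorm (A + B) \<le> mnorm A + mnorm (B::complex^'m^'m)"
  unfolding mnorm_def matrix_vector_mult_add_rdistrib
  by (rule onorm_triangle[OF mvm_bl mvm_bl])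

lemma mvm_neg: "(- A) *v x = - (A *v (x::complex^'m))"
  by (simp add: matrix_vector_mult_def vec_eq_iff sum_negf)

lemma mnorm_neg: "mnorm (- A) = mnorm (A::complex^'m^'m)"
  unfolding mnorm_def mvm_neg by (rule onorm_neg)

lemma mnorm_mult: "mnorm (A ** B) \<le> mnorm A * mnorm (B::complex^'m^'m)"
proof -
  have "(\<lambda>x. (A ** B) *v x) = (\<lambda>x. A *v x) \<circ> (\<lambda>x. B *v x)"
    by (simp add: o_def matrix_vector_mul_assoc)
  thus ?thesis unfolding mnorm_def using onorm_compose[OF mvm_bl mvm_bl] by simp
qed

lemma norm_le_sum_cart: "norm (x::complex^'m) \<le> (\<Sum>i\<in>UNIV. norm (x $ i))"
  unfolding norm_vec_def by (rule L2_set_le_sum) simp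

lemma mnorm_le_sum: "mnorm (M::complex^'m::finite^'m) \<le> (\<Sum>i\<in>UNIV. \<Sum>j\<in>UNIV. cmod (M $ i $ j))"
  unfolding mnorm_def
proof (rule onorm_le)
  fix x :: "complex^'m"
  have "norm (M *v x) \<le> (\<Sum>i\<in>UNIV. norm ((M *v x) $ i))" by (rule norm_le_sum_cart)
  also have "\<dots> \<le> (\<Sum>i\<in>UNIV. \<Sum>j\<in>UNIV. cmod (M $ i $ j) * norm x)"
  proof (rule sum_mono)
    fix i
    have "norm ((M *v x) $ i) = norm (\<Sum>j\<in>UNIV. M $ i $ j * x $ j)"
      by (simp add: matrix_vector_mult_def)
    also have "\<dots> \<le> (\<Sum>j\<in>UNIV. norm (M $ i $ j * x $ j))" by (rule norm_sum)
    also have "\<dots> \<le> (\<Sum>j\<in>UNIV. cmod (M $ i $ j) * norm x)"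
      by (rule sum_mono) (simp add: norm_mult mult_left_mono Finite_Cartesian_Product.norm_nth_le)
    finally show "norm ((M *v x) $ i) \<le> (\<Sum>j\<in>UNIV. cmod (M $ i $ j) * norm x)" .
  qed
  also have "\<dots> = (\<Sum>i\<in>UNIV. \<Sum>j\<in>UNIV. cmod (M $ i $ j)) * norm x"
    by (simp add: sum_distrib_right)
  finally show "norm (M *v x) \<le> (\<Sum>i\<in>UNIV. \<Sum>j\<in>UNIV. cmod (M $ i $ j)) * norm x" .
qed

lemma mnorm_le_entries:
  assumes "\<And>i j. cmod ((M::complex^'m::finite^'m) $ i $ j) \<le> b"
  shows "mnorm M \<le> real CARD('m) * real CARD('m) * b"
proof -
  have "mnorm M \<le> (\<Sum>i\<in>UNIV. \<Sum>j\<in>UNIV. cmod (M $ i $ j))" by (rule mnorm_le_sum)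
  also have "\<dots> \<le> (\<Sum>i\<in>(UNIV::'m set). \<Sum>j\<in>(UNIV::'m set). b)"
    by (intro sum_mono assms)
  finally show ?thesis by simp
qed

lemma mnorm_le_norm: "mnorm (M::complex^'m::finite^'m) \<le> real CARD('m) * real CARD('m) * norm M"
  by (rule mnorm_le_entries) (meson Finite_Cartesian_Product.norm_nth_le order_trans)

lemma mnorm_kron: "mnorm (kron A B) \<le> real CARD('n\<times>'n) * real CARD('n\<times>'n) * (mnorm A * mnorm (B::complex^'n::finite^'n))"
proof (rule mnorm_le_entries)
  fix p q :: "'n \<times> 'n"
  have "cmod (kron A B $ p $ q) = cmod (A $ fst p $ fst q) * cmod (B $ snd p $ snd q)"
    by (simp add: kron_def norm_mult)
  also have "\<dots> \<le> mnorm A * mnorm B"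
    by (intro mult_mono mnorm_entry mnorm_nonneg) simp
  finally show "cmod (kron A B $ p $ q) \<le> mnorm A * mnorm B" .
qed

lemma kron_mult: "kron A B ** kron C D = kron (A ** C) (B ** (D::complex^'n::finite^'n))"
proof -
  have "(\<Sum>r\<in>UNIV. A $ fst p $ fst r * B $ snd p $ snd r * (C $ fst r $ fst q * D $ snd r $ snd q))
      = (\<Sum>r1\<in>UNIV. A $ fst p $ r1 * C $ r1 $ fst q) * (\<Sum>r2\<in>UNIV. B $ snd p $ r2 * D $ r2 $ snd q)"
    for p q :: "'n \<times> 'n"
  proof -
    have "(\<Sum>r1\<in>UNIV. A $ fst p $ r1 * C $ r1 $ fst q) * (\<Sum>r2\<in>UNIV. B $ snd p $ r2 * D $ r2 $ snd q)
        = (\<Sum>r1\<in>UNIV. \<Sum>r2\<in>UNIV. (A $ fst p $ r1 * C $ r1 $ fst q) * (B $ snd p $ r2 * D $ r2 $ snd q))"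
      by (rule sum_product)
    also have "\<dots> = (\<Sum>r\<in>UNIV \<times> UNIV. (A $ fst p $ fst r * C $ fst r $ fst q) * (B $ snd p $ snd r * D $ snd r $ snd q))"
      by (subst sum.cartesian_product) (simp add: case_prod_beta)
    also have "\<dots> = (\<Sum>r\<in>UNIV. A $ fst p $ fst r * B $ snd p $ snd r * (C $ fst r $ fst q * D $ snd r $ snd q))"
      by (simp add: mult_ac)
    finally show ?thesis by simp
  qed
  thus ?thesis by (simp add: kron_def matrix_matrix_mult_def vec_eq_iff)
qed

lemma kron_neg: "kron (- A) B = - kron A (B::complex^'n::finite^'n)"
  by (simp add: kron_def vec_eq_iff)

lemma kron_zero: "kron 0 B = (0::complex^('n::finite\<times>'n)^('n\<times>'n))"
  by (simp add: kron_def vec_eq_iff)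

lemma kron_mat_offdiag: "p \<noteq> q \<Longrightarrow> kron (mat c) (mat d) $ p $ q = (0::complex)"
  by (cases p; cases q) (auto simp: kron_def mat_def)

lemma kron_mat_diag: "kron (mat c) (mat d) $ p $ p = (c * d::complex)"
  by (simp add: kron_def mat_def)

lemma mmult_add_r: "(A + B) ** C = A ** C + B ** (C::complex^'m^'m)"
  by (simp add: matrix_matrix_mult_def vec_eq_iff sum.distrib distrib_right)

lemma sum_mmult_left: "(\<Sum>i\<in>I. A i) ** (B::complex^'m^'m) = (\<Sum>i\<in>I. A i ** B)"
  by (induction I rule: infinite_finite_induct) (simp_all add: mmult_add_r)

lemma sum_mmult_right: "(B::complex^'m^'m) ** (\<Sum>i\<in>I. A i) = (\<Sum>i\<in>I. B ** A i)"
  by (induction I rule: infinite_finite_induct) (simp_all add: matrix_add_ldistrib)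

lemma mnorm_sum: "mnorm (\<Sum>i\<in>I. A i) \<le> (\<Sum>i\<in>I. mnorm (A i :: complex^'m^'m))"
proof (induction I rule: infinite_finite_induct)
  case (insert x F)
  thus ?case using mnorm_add[of "A x" "\<Sum>i\<in>F. A i"] by simp
qed (simp_all add: mnorm_zero)

definition ap :: "(real \<times> real \<Rightarrow> complex^('n::finite\<times>'n)^('n\<times>'n)) \<Rightarrow> real \<Rightarrow> bool" where
  "ap F e \<longleftrightarrow> (\<exists>k (fs :: nat \<Rightarrow> real \<Rightarrow> complex^'n^'n) gs. (\<forall>i<k. fs i \<in> Dn_set \<and> gs i \<in> Dn_set) \<and>
     (\<forall>p\<in>unit_square. mnorm (F p - (\<Sum>i<k. kron (fs i (fst p)) (gs i (snd p)))) < e))"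

lemma DnDn_set_iff: "F \<in> DnDn_set \<longleftrightarrow> (\<forall>p. p \<notin> unit_square \<longrightarrow> F p = 0) \<and> (\<forall>e>0. ap F e)"
  by (simp add: DnDn_set_def ap_def)

lemma ap_gen:
  fixes fs gs :: "'i \<Rightarrow> real \<Rightarrow> complex^'n::finite^'n"
  assumes I: "finite I" and fg: "\<And>i. i \<in> I \<Longrightarrow> fs i \<in> Dn_set \<and> gs i \<in> Dn_set"
    and err: "\<And>p. p \<in> unit_square \<Longrightarrow> mnorm (F p - (\<Sum>i\<in>I. kron (fs i (fst p)) (gs i (snd p)))) < e"
  shows "ap F e"
proof -
  obtain h where h: "bij_betw h {0..<card I} I" using ex_bij_betw_nat_finite[OF I] by blast
  have hI: "i < card I \<Longrightarrow> h i \<in> I" for i using bij_betwE[OF h] by auto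
  have "(\<Sum>i<card I. kron ((fs \<circ> h) i (fst p)) ((gs \<circ> h) i (snd p))) = (\<Sum>i\<in>I. kron (fs i (fst p)) (gs i (snd p)))" for p
    using sum.reindex_bij_betw[OF h, of "\<lambda>i. kron (fs i (fst p)) (gs i (snd p))"]
    by (simp add: lessThan_atLeast0)
  thus ?thesis unfolding ap_def using fg hI err
    by (intro exI[of _ "card I"] exI[of _ "fs \<circ> h"] exI[of _ "gs \<circ> h"]) auto
qed

lemma Dn_setD: assumes "f \<in> Dn_set"
  shows "continuous_on {0..1} f" "\<And>t. t \<notin> {0..1} \<Longrightarrow> f t = 0" "\<exists>c. f 0 = mat c" "\<exists>c. f 1 = mat c"
  using assms by (auto simp: Dn_set_def)

lemma Dn_setI: "continuous_on {0..1} f \<Longrightarrow> (\<And>t. t \<notin> {0..1} \<Longrightarrow> f t = 0) \<Longrightarrow> (\<exists>c. f 0 = mat c) \<Longrightarrow> (\<exists>c. f 1 = mat c) \<Longrightarrow> f \<in> Dn_set"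
  by (auto simp: Dn_set_def)

lemma dn_bound:
  assumes f: "(f :: real \<Rightarrow> complex^'n::finite^'n) \<in> Dn_set"
  shows "\<exists>C\<ge>0. \<forall>s. mnorm (f s) \<le> C"
proof -
  have "compact (f ` {0..1})" by (rule compact_continuous_image[OF Dn_setD(1)[OF f] compact_Icc])
  hence "bounded (f ` {0..1})" by (rule compact_imp_bounded)
  then obtain a where a: "\<And>x. x \<in> f ` {0..1} \<Longrightarrow> norm x \<le> a" unfolding bounded_iff by blast
  define C where "C = real CARD('n) * real CARD('n) * max a 0"
  have "mnorm (f s) \<le> C" for s
  proof (cases "s \<in> {0..1}")
    case True
    have "mnorm (f s) \<le> real CARD('n) * real CARD('n) * norm (f s)" by (rule mnorm_le_norm)
    also have "\<dots> \<le> C" unfolding C_def using a[of "f s"] True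
      by (intro mult_left_mono) auto
    finally show ?thesis .
  next
    case False
    thus ?thesis using Dn_setD(2)[OF f False] by (simp add: mnorm_zero C_def)
  qed
  moreover have "C \<ge> 0" by (simp add: C_def)
  ultimately show ?thesis by blast
qed

lemma mat_mult_mat: "mat c ** mat d = (mat (c * d) :: complex^'m::finite^'m)"
proof -
  have "(\<Sum>k\<in>UNIV. (if i = k then c else 0) * (if k = j then d else 0)) = (if i = j then c * d else 0)" for i j :: 'm
  proof -
    have "(\<Sum>k\<in>UNIV. (if i = k then c else 0) * (if k = j then d else 0)) = (\<Sum>k\<in>UNIV. if k = i then c * (if i = j then d else 0) else 0)"
      by (rule sum.cong) auto
    also have "\<dots> = (if i = j then c * d else 0)" by simp
    finally show ?thesis .
  qed
  thus ?thesis by (simp add: vec_eq_iff matrix_matrix_mult_def mat_def)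
qed
lemma neg_mat: "- mat c = (mat (- c) :: complex^'m::finite^'m)"
  by (simp add: vec_eq_iff mat_def)

lemma dn_mult:
  assumes f: "(f :: real \<Rightarrow> complex^'n::finite^'n) \<in> Dn_set" and g: "g \<in> Dn_set"
  shows "(\<lambda>u. f u ** g u) \<in> Dn_set"
proof (rule Dn_setI)
  show "continuous_on {0..1} (\<lambda>u. f u ** g u)"
    unfolding matrix_matrix_mult_def using Dn_setD(1)[OF f] Dn_setD(1)[OF g]
    by (intro continuous_intros)
  show "\<And>t. t \<notin> {0..1} \<Longrightarrow> f t ** g t = 0" using Dn_setD(2)[OF f] by simp
  show "\<exists>c. f 0 ** g 0 = mat c" using Dn_setD(3)[OF f] Dn_setD(3)[OF g] mat_mult_mat by metis
  show "\<exists>c. f 1 ** g 1 = mat c" using Dn_setD(4)[OF f] Dn_setD(4)[OF g] mat_mult_mat by metis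
qed

lemma dn_neg:
  assumes f: "(f :: real \<Rightarrow> complex^'n::finite^'n) \<in> Dn_set"
  shows "(\<lambda>u. - f u) \<in> Dn_set"
proof (rule Dn_setI)
  show "continuous_on {0..1} (\<lambda>u. - f u)" using Dn_setD(1)[OF f] by (intro continuous_intros)
  show "\<And>t. t \<notin> {0..1} \<Longrightarrow> - f t = 0" using Dn_setD(2)[OF f] by simp
  show "\<exists>c. - f 0 = mat c" using Dn_setD(3)[OF f] neg_mat by metis
  show "\<exists>c. - f 1 = mat c" using Dn_setD(4)[OF f] neg_mat by metis
qed

lemma dn_scal:
  assumes g: "continuous_on {0..1} g" and g0: "\<exists>c. g 0 *\<^sub>R M = mat c" and g1: "\<exists>c. g 1 *\<^sub>R M = mat c"
  shows "(\<lambda>u. if u \<in> {0..1} then g u *\<^sub>R (M::complex^'n::finite^'n) else 0) \<in> Dn_set"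
proof (rule Dn_setI)
  have "continuous_on {0..1} (\<lambda>u. g u *\<^sub>R M)" using g by (intro continuous_intros)
  thus "continuous_on {0..1} (\<lambda>u. if u \<in> {0..1} then g u *\<^sub>R M else 0)"
    by (rule continuous_on_cong[THEN iffD1, rotated 2]) auto
qed (use g0 g1 in auto)

definition u1 :: "real \<Rightarrow> complex^'n::finite^'n" where
  "u1 = (\<lambda>u. if u \<in> {0..1} then mat 1 else 0)"

lemma dn_u1: "(u1 :: real \<Rightarrow> complex^'n::finite^'n) \<in> Dn_set"
proof -
  have "(\<lambda>u. if u \<in> {0..1} then (1::real) *\<^sub>R (mat 1 :: complex^'n^'n) else 0) \<in> Dn_set"
    by (rule dn_scal) auto
  moreover have "(\<lambda>u. if u \<in> {0..1} then (1::real) *\<^sub>R (mat 1 :: complex^'n^'n) else 0) = u1"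
    by (rule ext) (simp add: u1_def)
  ultimately show ?thesis by simp
qed

lemma dd_p0: assumes a: "a \<in> Dn_set" shows "p0 a \<in> DnDn_set"
  unfolding DnDn_set_iff
proof (intro conjI allI impI)
  show "p0 a p = 0" if "p \<notin> unit_square" for p using that by (simp add: p0_def)
  fix e :: real assume e: "e > 0"
  show "ap (p0 a) e"
    unfolding ap_def using a dn_u1 e
    by (intro exI[of _ 1] exI[of _ "\<lambda>_. a"] exI[of _ "\<lambda>_. u1"])
       (auto simp: p0_def u1_def mnorm_zero mem_Times_iff)
qed

lemma dd_p1: assumes a: "a \<in> Dn_set" shows "p1 a \<in> DnDn_set"
  unfolding DnDn_set_iff
proof (intro conjI allI impI)
  show "p1 a p = 0" if "p \<notin> unit_square" for p using that by (simp add: p1_def)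
  fix e :: real assume e: "e > 0"
  show "ap (p1 a) e"
    unfolding ap_def using a dn_u1 e
    by (intro exI[of _ 1] exI[of _ "\<lambda>_. u1"] exI[of _ "\<lambda>_. a"])
       (auto simp: p1_def u1_def mnorm_zero mem_Times_iff)
qed

lemma dd_add:
  assumes F: "F \<in> DnDn_set" and G: "G \<in> DnDn_set"
  shows "(\<lambda>x. F x + G x) \<in> DnDn_set"
  unfolding DnDn_set_iff
proof (intro conjI allI impI)
  show "F p + G p = 0" if "p \<notin> unit_square" for p
  proof -
    have "F p = 0" "G p = 0" using that F G unfolding DnDn_set_iff by blast+
    thus ?thesis by simp
  qed
  fix e :: real assume e: "e > 0"
  have "ap F (e/2)" using F e unfolding DnDn_set_iff by simp
  then obtain k1 :: nat and fs1 gs1 where 1: "\<forall>i<k1. fs1 i \<in> Dn_set \<and> gs1 i \<in> Dn_set"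
    "\<forall>p\<in>unit_square. mnorm (F p - (\<Sum>i<k1. kron (fs1 i (fst p)) (gs1 i (snd p)))) < e/2"
    unfolding ap_def by blast
  have "ap G (e/2)" using G e unfolding DnDn_set_iff by simp
  then obtain k2 :: nat and fs2 gs2 where 2: "\<forall>i<k2. fs2 i \<in> Dn_set \<and> gs2 i \<in> Dn_set"
    "\<forall>p\<in>unit_square. mnorm (G p - (\<Sum>i<k2. kron (fs2 i (fst p)) (gs2 i (snd p)))) < e/2"
    unfolding ap_def by blast
  show "ap (\<lambda>x. F x + G x) e"
  proof (rule ap_gen[where I = "{..<k1} <+> {..<k2}" and fs = "case_sum fs1 fs2" and gs = "case_sum gs1 gs2"])
    show "finite ({..<k1} <+> {..<k2})" by simp
    show "case_sum fs1 fs2 i \<in> Dn_set \<and> case_sum gs1 gs2 i \<in> Dn_set" if "i \<in> {..<k1} <+> {..<k2}" for i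
      using that 1(1) 2(1) by auto
    fix p :: "real \<times> real" assume p: "p \<in> unit_square"
    let ?S1 = "\<Sum>i<k1. kron (fs1 i (fst p)) (gs1 i (snd p))"
    let ?S2 = "\<Sum>i<k2. kron (fs2 i (fst p)) (gs2 i (snd p))"
    have eS: "(\<Sum>i\<in>{..<k1} <+> {..<k2}. kron (case_sum fs1 fs2 i (fst p)) (case_sum gs1 gs2 i (snd p))) = ?S1 + ?S2"
      by (subst sum.Plus) (simp_all add: o_def)
    have eD: "F p + G p - (?S1 + ?S2) = (F p - ?S1) + (G p - ?S2)" by (simp add: algebra_simps)
    have b1: "mnorm (F p - ?S1) < e/2" using 1(2) p by blast
    have b2: "mnorm (G p - ?S2) < e/2" using 2(2) p by blast
    show "mnorm (F p + G p - (\<Sum>i\<in>{..<k1} <+> {..<k2}. kron (case_sum fs1 fs2 i (fst p)) (case_sum gs1 gs2 i (snd p)))) < e"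
      unfolding eS eD using mnorm_add[of "F p - ?S1" "G p - ?S2"] b1 b2 by linarith
  qed
qed

lemma dd_neg:
  assumes F: "F \<in> DnDn_set"
  shows "(\<lambda>x. - F x) \<in> DnDn_set"
  unfolding DnDn_set_iff
proof (intro conjI allI impI)
  show "- F p = 0" if "p \<notin> unit_square" for p
  proof -
    have "F p = 0" using that F unfolding DnDn_set_iff by blast
    thus ?thesis by simp
  qed
  fix e :: real assume e: "e > 0"
  have "ap F e" using F e unfolding DnDn_set_iff by simp
  then obtain k1 :: nat and fs1 gs1 where 1: "\<forall>i<k1. fs1 i \<in> Dn_set \<and> gs1 i \<in> Dn_set"
    "\<forall>p\<in>unit_square. mnorm (F p - (\<Sum>i<k1. kron (fs1 i (fst p)) (gs1 i (snd p)))) < e"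
    unfolding ap_def by blast
  show "ap (\<lambda>x. - F x) e"
  proof (rule ap_gen[where I = "{..<k1}" and fs = "\<lambda>i u. - fs1 i u" and gs = gs1])
    show "finite {..<k1}" by simp
    show "(\<lambda>u. - fs1 i u) \<in> Dn_set \<and> gs1 i \<in> Dn_set" if "i \<in> {..<k1}" for i
      using that 1(1) dn_neg by auto
    fix p :: "real \<times> real" assume p: "p \<in> unit_square"
    let ?S1 = "\<Sum>i<k1. kron (fs1 i (fst p)) (gs1 i (snd p))"
    have eS: "(\<Sum>i\<in>{..<k1}. kron (- fs1 i (fst p)) (gs1 i (snd p))) = - ?S1"
      by (simp add: kron_neg sum_negf)
    have eD: "- F p - (- ?S1) = - (F p - ?S1)" by simp
    have b1: "mnorm (F p - ?S1) < e" using 1(2) p by blast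
    show "mnorm (- F p - (\<Sum>i\<in>{..<k1}. kron (- fs1 i (fst p)) (gs1 i (snd p)))) < e"
      unfolding eS eD mnorm_neg using b1 .
  qed
qed

lemma small_prod:
  fixes a M e :: real
  assumes "0 \<le> M" "0 \<le> a" "a < e / (2 * (M + 1))"
  shows "a * M < e / 2"
proof -
  have "a * (2 * (M + 1)) < e" using assms by (simp add: pos_less_divide_eq)
  hence "a * (M + 1) < e / 2" by (simp add: field_simps)
  moreover have "a * M \<le> a * (M + 1)" using assms by (simp add: mult_left_mono)
  ultimately show ?thesis by linarith
qed

lemma ks_bound:
  fixes fs gs :: "nat \<Rightarrow> real \<Rightarrow> complex^'n::finite^'n"
  shows "(\<forall>i<k. fs i \<in> Dn_set \<and> gs i \<in> Dn_set) \<Longrightarrow> \<exists>C\<ge>0. \<forall>p. mnorm (\<Sum>i<k. kron (fs i (fst p)) (gs i (snd p))) \<le> C"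
proof (induction k)
  case 0
  show ?case by (intro exI[of _ 0]) (simp add: mnorm_zero)
next
  case (Suc k)
  obtain C where C: "C \<ge> 0" "\<And>p. mnorm (\<Sum>i<k. kron (fs i (fst p)) (gs i (snd p))) \<le> C"
    using Suc by auto
  obtain Cf where Cf: "Cf \<ge> 0" "\<And>s. mnorm (fs k s) \<le> Cf" using dn_bound[of "fs k"] Suc.prems by auto
  obtain Cg where Cg: "Cg \<ge> 0" "\<And>s. mnorm (gs k s) \<le> Cg" using dn_bound[of "gs k"] Suc.prems by auto
  define K where "K = real CARD('n\<times>'n) * real CARD('n\<times>'n)"
  have K: "K \<ge> 0" by (simp add: K_def)
  have "mnorm (\<Sum>i<Suc k. kron (fs i (fst p)) (gs i (snd p))) \<le> C + K * (Cf * Cg)" for p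
  proof -
    have "mnorm (\<Sum>i<Suc k. kron (fs i (fst p)) (gs i (snd p)))
        \<le> mnorm (\<Sum>i<k. kron (fs i (fst p)) (gs i (snd p))) + mnorm (kron (fs k (fst p)) (gs k (snd p)))"
      by (simp add: mnorm_add)
    also have "\<dots> \<le> C + K * (mnorm (fs k (fst p)) * mnorm (gs k (snd p)))"
      using C(2)[of p] mnorm_kron[of "fs k (fst p)" "gs k (snd p)"] by (simp add: K_def)
    also have "\<dots> \<le> C + K * (Cf * Cg)"
      using Cf Cg K mnorm_nonneg by (intro add_left_mono mult_left_mono mult_mono) auto
    finally show ?thesis .
  qed
  moreover have "C + K * (Cf * Cg) \<ge> 0" using C Cf Cg K by simp
  ultimately show ?case by blast
qed

lemma dd_bound:
  assumes F: "F \<in> DnDn_set"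
  shows "\<exists>C\<ge>0. \<forall>p\<in>unit_square. mnorm (F p) \<le> C"
proof -
  have "ap F 1" using F unfolding DnDn_set_iff by simp
  then obtain k1 :: nat and fs1 gs1 where 1: "\<forall>i<k1. fs1 i \<in> Dn_set \<and> gs1 i \<in> Dn_set"
    "\<forall>p\<in>unit_square. mnorm (F p - (\<Sum>i<k1. kron (fs1 i (fst p)) (gs1 i (snd p)))) < 1"
    unfolding ap_def by blast
  obtain C where C: "C \<ge> 0" "\<And>p. mnorm (\<Sum>i<k1. kron (fs1 i (fst p)) (gs1 i (snd p))) \<le> C"
    using ks_bound[OF 1(1)] by auto
  have "mnorm (F p) \<le> 1 + C" if p: "p \<in> unit_square" for p
  proof -
    let ?S = "\<Sum>i<k1. kron (fs1 i (fst p)) (gs1 i (snd p))"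
    have "F p = (F p - ?S) + ?S" by simp
    have "mnorm (F p) \<le> mnorm (F p - ?S) + mnorm ?S" using mnorm_add[of "F p - ?S" ?S] by simp
    moreover have "mnorm (F p - ?S) < 1" using 1(2) p by blast
    ultimately show ?thesis using C(2)[of p] by linarith
  qed
  thus ?thesis using C(1) by (intro exI[of _ "1 + C"]) auto
qed

lemma mmult_diff_r: "(A - B) ** C = A ** C - B ** (C::complex^'m^'m)"
  by (simp add: matrix_matrix_mult_def vec_eq_iff sum_subtractf left_diff_distrib)

lemma mmult_diff_l: "C ** (A - B) = C ** A - C ** (B::complex^'m^'m)"
  by (simp add: matrix_matrix_mult_def vec_eq_iff sum_subtractf right_diff_distrib)

lemma dd_mult:
  assumes F: "F \<in> DnDn_set" and G: "G \<in> DnDn_set"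
  shows "(\<lambda>x. F x ** G x) \<in> DnDn_set"
  unfolding DnDn_set_iff
proof (intro conjI allI impI)
  show "F p ** G p = 0" if "p \<notin> unit_square" for p
  proof -
    have "F p = 0" using that F unfolding DnDn_set_iff by blast
    thus ?thesis by simp
  qed
  fix e :: real assume e: "e > 0"
  obtain MG where MG: "MG \<ge> 0" "\<And>p. p \<in> unit_square \<Longrightarrow> mnorm (G p) \<le> MG"
    using dd_bound[OF G] by auto
  have "e / (2 * (MG + 1)) > 0" using e MG by simp
  hence "ap F (e / (2 * (MG + 1)))" using F unfolding DnDn_set_iff by simp
  then obtain k1 :: nat and fs1 gs1 where 1: "\<forall>i<k1. fs1 i \<in> Dn_set \<and> gs1 i \<in> Dn_set"
    "\<forall>p\<in>unit_square. mnorm (F p - (\<Sum>i<k1. kron (fs1 i (fst p)) (gs1 i (snd p)))) < e / (2 * (MG + 1))"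
    unfolding ap_def by blast
  obtain MS where MS: "MS \<ge> 0" "\<And>p. mnorm (\<Sum>i<k1. kron (fs1 i (fst p)) (gs1 i (snd p))) \<le> MS"
    using ks_bound[OF 1(1)] by auto
  have "e / (2 * (MS + 1)) > 0" using e MS by simp
  hence "ap G (e / (2 * (MS + 1)))" using G unfolding DnDn_set_iff by simp
  then obtain k2 :: nat and fs2 gs2 where 2: "\<forall>i<k2. fs2 i \<in> Dn_set \<and> gs2 i \<in> Dn_set"
    "\<forall>p\<in>unit_square. mnorm (G p - (\<Sum>i<k2. kron (fs2 i (fst p)) (gs2 i (snd p)))) < e / (2 * (MS + 1))"
    unfolding ap_def by blast
  show "ap (\<lambda>x. F x ** G x) e"
  proof (rule ap_gen[where I = "{..<k1} \<times> {..<k2}" and fs = "\<lambda>(i,j) u. fs1 i u ** fs2 j u"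
        and gs = "\<lambda>(i,j) u. gs1 i u ** gs2 j u"])
    show "finite ({..<k1} \<times> {..<k2})" by simp
    show "(case ij of (i, j) \<Rightarrow> \<lambda>u. fs1 i u ** fs2 j u) \<in> Dn_set \<and>
          (case ij of (i, j) \<Rightarrow> \<lambda>u. gs1 i u ** gs2 j u) \<in> Dn_set" if "ij \<in> {..<k1} \<times> {..<k2}" for ij
      using that 1(1) 2(1) by (auto intro!: dn_mult)
    fix p :: "real \<times> real" assume p: "p \<in> unit_square"
    let ?S1 = "\<Sum>i<k1. kron (fs1 i (fst p)) (gs1 i (snd p))"
    let ?S2 = "\<Sum>j<k2. kron (fs2 j (fst p)) (gs2 j (snd p))"
    have eS: "(\<Sum>ij\<in>{..<k1} \<times> {..<k2}. kron ((case ij of (i, j) \<Rightarrow> \<lambda>u. fs1 i u ** fs2 j u) (fst p))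
                 ((case ij of (i, j) \<Rightarrow> \<lambda>u. gs1 i u ** gs2 j u) (snd p))) = ?S1 ** ?S2"
    proof -
      have "?S1 ** ?S2 = (\<Sum>i<k1. \<Sum>j<k2. kron (fs1 i (fst p)) (gs1 i (snd p)) ** kron (fs2 j (fst p)) (gs2 j (snd p)))"
        unfolding sum_mmult_left by (simp only: sum_mmult_right)
      also have "\<dots> = (\<Sum>i<k1. \<Sum>j<k2. kron (fs1 i (fst p) ** fs2 j (fst p)) (gs1 i (snd p) ** gs2 j (snd p)))"
        by (simp add: kron_mult)
      also have "\<dots> = (\<Sum>ij\<in>{..<k1} \<times> {..<k2}. kron ((case ij of (i, j) \<Rightarrow> \<lambda>u. fs1 i u ** fs2 j u) (fst p))
                 ((case ij of (i, j) \<Rightarrow> \<lambda>u. gs1 i u ** gs2 j u) (snd p)))"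
        by (subst sum.cartesian_product) (simp add: case_prod_beta)
      finally show ?thesis by simp
    qed
    have eD: "F p ** G p - ?S1 ** ?S2 = (F p - ?S1) ** G p + ?S1 ** (G p - ?S2)"
      by (simp add: mmult_diff_r mmult_diff_l)
    have "mnorm ((F p - ?S1) ** G p + ?S1 ** (G p - ?S2)) \<le> mnorm ((F p - ?S1) ** G p) + mnorm (?S1 ** (G p - ?S2))"
      by (rule mnorm_add)
    also have "\<dots> \<le> mnorm (F p - ?S1) * mnorm (G p) + mnorm ?S1 * mnorm (G p - ?S2)"
      by (intro add_mono mnorm_mult)
    also have "\<dots> \<le> mnorm (F p - ?S1) * MG + MS * mnorm (G p - ?S2)"
      using MG(2)[OF p] MS(2)[of p] mnorm_nonneg
      by (intro add_mono mult_left_mono mult_right_mono) auto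
    also have "\<dots> < e / 2 + e / 2"
    proof (rule add_strict_mono)
      show "mnorm (F p - ?S1) * MG < e / 2"
        using small_prod[OF MG(1) mnorm_nonneg] 1(2) p by blast
      have "mnorm (G p - ?S2) * MS < e / 2"
        using small_prod[OF MS(1) mnorm_nonneg] 2(2) p by blast
      thus "MS * mnorm (G p - ?S2) < e / 2" by (simp add: mult.commute)
    qed
    finally show "mnorm (F p ** G p - (\<Sum>ij\<in>{..<k1} \<times> {..<k2}. kron ((case ij of (i, j) \<Rightarrow> \<lambda>u. fs1 i u ** fs2 j u) (fst p))
                 ((case ij of (i, j) \<Rightarrow> \<lambda>u. gs1 i u ** gs2 j u) (snd p)))) < e"
      unfolding eS eD by simp
  qed
qed

lemma dd_diag:
  assumes F: "F \<in> DnDn_set" and pq: "p \<noteq> q"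
  shows "F (0,1) $ p $ q = 0"
proof -
  have small: "cmod (F (0,1) $ p $ q) < e" if e: "e > 0" for e
  proof -
    have "ap F e" using F e unfolding DnDn_set_iff by simp
    then obtain k1 :: nat and fs1 gs1 where 1: "\<forall>i<k1. fs1 i \<in> Dn_set \<and> gs1 i \<in> Dn_set"
      "\<forall>p\<in>unit_square. mnorm (F p - (\<Sum>i<k1. kron (fs1 i (fst p)) (gs1 i (snd p)))) < e"
      unfolding ap_def by blast
    let ?S = "\<Sum>i<k1. kron (fs1 i 0) (gs1 i 1)"
    have "?S $ p $ q = (\<Sum>i<k1. kron (fs1 i 0) (gs1 i 1) $ p $ q)" by simp
    also have "\<dots> = 0"
    proof (rule sum.neutral, rule ballI)
      fix i assume "i \<in> {..<k1}"
      then obtain c d where "fs1 i 0 = mat c" "gs1 i 1 = mat d" using 1(1) Dn_setD(3,4) by blast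
      thus "kron (fs1 i 0) (gs1 i 1) $ p $ q = 0" using kron_mat_offdiag[OF pq] by simp
    qed
    finally have S0: "?S $ p $ q = 0" .
    have eq: "(F (0,1) - ?S) $ p $ q = F (0,1) $ p $ q" using S0 by simp
    have "cmod ((F (0,1) - ?S) $ p $ q) \<le> mnorm (F (0,1) - ?S)" by (rule mnorm_entry)
    hence le: "cmod (F (0,1) $ p $ q) \<le> mnorm (F (0,1) - ?S)" by (simp only: eq)
    have mem: "(0::real, 1::real) \<in> unit_square" by simp
    have "mnorm (F (0,1) - ?S) < e" using bspec[OF 1(2) mem] by simp
    thus ?thesis using le by linarith
  qed
  show ?thesis
  proof (rule ccontr)
    assume "F (0,1) $ p $ q \<noteq> 0"
    hence "cmod (F (0,1) $ p $ q) > 0" by simp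
    thus False using small[of "cmod (F (0,1) $ p $ q)"] by simp
  qed
qed

definition Em :: "'n \<Rightarrow> 'n \<Rightarrow> complex^'n::finite^'n" where
  "Em a b = (\<chi> i j. if i = a \<and> j = b then 1 else 0)"

lemma Em_mult: "Em a b ** Em c d = (if b = c then Em a d else (0::complex^'n::finite^'n))"
proof -
  have "(\<Sum>k\<in>UNIV. (if i = a \<and> k = b then 1 else 0) * (if k = c \<and> j = d then 1 else 0))
      = (if b = c then (if i = a \<and> j = d then 1 else 0) else (0::complex))" for i j :: 'n
  proof -
    have "(\<Sum>k\<in>UNIV. (if i = a \<and> k = b then 1 else 0) * (if k = c \<and> j = d then 1 else 0))
        = (\<Sum>k\<in>UNIV. if k = b then (if i = a then 1 else 0) * (if b = c \<and> j = d then 1 else 0) else (0::complex))"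
      by (rule sum.cong) auto
    also have "\<dots> = (if i = a then 1 else 0) * (if b = c \<and> j = d then 1 else 0)" by simp
    finally show ?thesis by auto
  qed
  thus ?thesis by (auto simp: vec_eq_iff matrix_matrix_mult_def Em_def)
qed

lemma sum_Em: "(\<Sum>j\<in>UNIV. Em j j) = (mat 1 :: complex^'n::finite^'n)"
proof -
  have "(\<Sum>j\<in>UNIV. if i = j \<and> k = j then 1 else 0) = (if i = k then 1 else (0::complex))" for i k :: 'n
  proof -
    have "(\<Sum>j\<in>UNIV. if i = j \<and> k = j then 1 else 0) = (\<Sum>j\<in>UNIV. if j = i then (if k = i then 1 else 0) else (0::complex))"
      by (rule sum.cong) auto
    also have "\<dots> = (if i = k then 1 else 0)" by auto
    finally show ?thesis .
  qed
  thus ?thesis by (simp add: vec_eq_iff Em_def mat_def sum_component)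
qed

lemma smm: "(s *\<^sub>R A) ** (t *\<^sub>R B) = (s * t) *\<^sub>R (A ** (B::complex^'n::finite^'n))"
  by (simp add: matrix_matrix_mult_def vec_eq_iff scaleR_sum_right mult.commute)

definition Xm :: "'n \<Rightarrow> 'n \<Rightarrow> real \<Rightarrow> complex^'n::finite^'n" where
  "Xm a b = (\<lambda>u. if u \<in> {0..1} then sqrt (u * (1 - u)) *\<^sub>R Em a b else 0)"

definition hh :: "real \<Rightarrow> complex^'n::finite^'n" where
  "hh = (\<lambda>u. if u \<in> {0..1} then u *\<^sub>R mat 1 else 0)"

definition Ks :: "'n set \<Rightarrow> real \<Rightarrow> complex^'n::finite^'n" where
  "Ks S = (\<lambda>u. if u \<in> {0..1} then (u * (1 - u)) *\<^sub>R (\<Sum>j\<in>S. Em j j) else 0)"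

lemma Xm_in: "Xm a b \<in> Dn_set"
  unfolding Xm_def by (rule dn_scal) (auto intro!: continuous_intros exI[of _ 0])

lemma hh_in: "(hh :: real \<Rightarrow> complex^'n::finite^'n) \<in> Dn_set"
  unfolding hh_def
  apply (rule dn_scal)
    apply (intro continuous_intros)
   apply (rule exI[of _ 0], simp)
  apply (rule exI[of _ 1], simp)
  done

lemma Ks_in: "Ks S \<in> Dn_set"
  unfolding Ks_def by (rule dn_scal) (auto intro!: continuous_intros exI[of _ 0])

lemma hh2_in: "(\<lambda>x. hh x ** hh x :: complex^'n::finite^'n) \<in> Dn_set"
  using dn_mult[OF hh_in hh_in] .

lemma zero_in: "(\<lambda>_. 0 :: complex^'n::finite^'n) \<in> Dn_set"
  by (rule Dn_setI) (auto intro: exI[of _ 0])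

lemma XX: "(\<lambda>x. Xm a b x ** Xm c d x) = (\<lambda>u. if u \<in> {0..1} then (u * (1 - u)) *\<^sub>R (Em a b ** Em c d) else 0)"
proof (rule ext)
  fix u :: real
  show "Xm a b u ** Xm c d u = (if u \<in> {0..1} then (u * (1 - u)) *\<^sub>R (Em a b ** Em c d) else 0)"
  proof (cases "u \<in> {0..1}")
    case True
    hence "sqrt (u * (1 - u)) * sqrt (u * (1 - u)) = u * (1 - u)" by (simp add: real_sqrt_mult_self)
    thus ?thesis using True by (simp add: Xm_def smm)
  qed (auto simp: Xm_def)
qed

lemma char_Dn:
  fixes \<phi> :: "(real \<Rightarrow> complex^'n::finite^'n) \<Rightarrow> complex"
  assumes card: "CARD('n) > 1"
    and padd: "\<And>a b. a \<in> Dn_set \<Longrightarrow> b \<in> Dn_set \<Longrightarrow> \<phi> (\<lambda>x. a x + b x) = \<phi> a + \<phi> b"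
    and pmul: "\<And>a b. a \<in> Dn_set \<Longrightarrow> b \<in> Dn_set \<Longrightarrow> \<phi> (\<lambda>x. a x ** b x) = \<phi> a * \<phi> b"
  shows "\<phi> hh = 0 \<or> \<phi> hh = 1"
proof -
  obtain \<alpha> :: 'n where True by simp
  have "UNIV \<noteq> {\<alpha>}"
  proof
    assume "UNIV = {\<alpha>}"
    hence "card (UNIV :: 'n set) = card {\<alpha>}" by (rule arg_cong)
    thus False using card by simp
  qed
  note ne = this
  have "\<exists>\<beta>::'n. \<beta> \<noteq> \<alpha>"
  proof (rule ccontr)
    assume "\<not> (\<exists>\<beta>::'n. \<beta> \<noteq> \<alpha>)"
    hence "\<And>x::'n. x \<in> {\<alpha>}" by simp
    hence "UNIV = {\<alpha>}" by (rule UNIV_eq_I)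
    thus False using ne by simp
  qed
  then obtain \<beta> :: 'n where ab: "\<alpha> \<noteq> \<beta>" by metis
  have p0: "\<phi> (\<lambda>_. 0) = 0"
    using padd[OF zero_in zero_in] by simp
  have pX: "\<phi> (Xm a b) = 0" if "a \<noteq> b" for a b :: 'n
  proof -
    have "b \<noteq> a" using that by simp
    hence E0: "Em a b ** Em a b = 0" by (simp add: Em_mult)
    have "(\<lambda>x. Xm a b x ** Xm a b x) = (\<lambda>_. 0)" unfolding XX E0 by (simp add: fun_eq_iff)
    hence "\<phi> (Xm a b) * \<phi> (Xm a b) = 0" using pmul[OF Xm_in Xm_in, of a b a b] p0 by simp
    thus ?thesis by simp
  qed
  have KX: "(\<lambda>x. Xm j c x ** Xm c j x) = Ks {j}" for j c :: 'n
    by (simp add: XX Em_mult Ks_def fun_eq_iff)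
  have pK: "\<phi> (Ks {j}) = 0" for j :: 'n
  proof (cases "j = \<alpha>")
    case True
    have "\<phi> (Ks {j}) = \<phi> (Xm j \<beta>) * \<phi> (Xm \<beta> j)" unfolding KX[of j \<beta>, symmetric] by (rule pmul[OF Xm_in Xm_in])
    thus ?thesis using pX[of j \<beta>] True ab by simp
  next
    case False
    have "\<phi> (Ks {j}) = \<phi> (Xm j \<alpha>) * \<phi> (Xm \<alpha> j)" unfolding KX[of j \<alpha>, symmetric] by (rule pmul[OF Xm_in Xm_in])
    thus ?thesis using pX[of j \<alpha>] False by simp
  qed
  have pKs: "\<phi> (Ks S) = 0" if "finite S" for S :: "'n set"
    using that
  proof (induction S rule: finite_induct)
    case empty
    have "Ks ({}::'n set) = (\<lambda>_. 0)" by (rule ext) (simp add: Ks_def)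
    thus ?case using p0 by simp
  next
    case (insert j S)
    have "Ks (insert j S) = (\<lambda>x. Ks {j} x + Ks S x)"
      by (rule ext) (simp add: Ks_def insert.hyps scaleR_right_distrib)
    thus ?case using padd[OF Ks_in Ks_in, of "{j}" S] pK[of j] insert.IH by simp
  qed
  have "(hh :: real \<Rightarrow> complex^'n^'n) = (\<lambda>x. Ks UNIV x + hh x ** hh x)"
  proof (rule ext)
    fix u :: real
    show "(hh u :: complex^'n^'n) = Ks UNIV u + hh u ** hh u"
    proof (cases "u \<in> {0..1}")
      case True
      have "(u * (1 - u)) *\<^sub>R (mat 1 :: complex^'n^'n) + (u * u) *\<^sub>R mat 1 = (u * (1 - u) + u * u) *\<^sub>R mat 1"
        by (simp add: scaleR_left_distrib)
      also have "u * (1 - u) + u * u = u" by (simp add: algebra_simps)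
      finally have A: "(u * (1 - u)) *\<^sub>R (mat 1 :: complex^'n^'n) + (u * u) *\<^sub>R mat 1 = u *\<^sub>R mat 1" .
      have B: "(u *\<^sub>R (mat 1 :: complex^'n^'n)) ** (u *\<^sub>R mat 1) = (u * u) *\<^sub>R mat 1"
        using smm[of u "mat 1" u "mat 1"] by simp
      have e1: "hh u = u *\<^sub>R (mat 1 :: complex^'n^'n)" using True by (simp add: hh_def)
      have e2: "Ks UNIV u = (u * (1 - u)) *\<^sub>R (mat 1 :: complex^'n^'n)" using True by (simp add: Ks_def sum_Em)
      have "Ks UNIV u + hh u ** hh u = (u * (1 - u)) *\<^sub>R (mat 1 :: complex^'n^'n) + (u * u) *\<^sub>R mat 1"
        unfolding e1 e2 B ..
      also have "\<dots> = hh u" unfolding A e1 ..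
      finally show ?thesis by (rule sym)
    qed (auto simp: hh_def Ks_def)
  qed
  hence "\<phi> hh = \<phi> (Ks UNIV) + \<phi> hh * \<phi> hh"
    using padd[OF Ks_in hh2_in, of UNIV] pmul[OF hh_in hh_in] by simp
  hence "\<phi> hh * (1 - \<phi> hh) = 0" using pKs[of UNIV] by (simp add: algebra_simps)
  thus ?thesis by simp
qed

definition psi0 :: "(real \<times> real \<Rightarrow> complex^('n::finite\<times>'n)^('n\<times>'n)) \<Rightarrow> complex" where
  "psi0 F = F (0,1) $ undefined $ undefined"

lemma psi0_mult:
  fixes F G :: "real \<times> real \<Rightarrow> complex^('n::finite\<times>'n)^('n\<times>'n)"
  assumes F: "F \<in> DnDn_set"
  shows "psi0 (\<lambda>x. F x ** G x) = psi0 F * psi0 G"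
proof -
  let ?u = "undefined :: 'n \<times> 'n"
  have "(F (0,1) ** G (0,1)) $ ?u $ ?u = (\<Sum>r\<in>UNIV. F (0,1) $ ?u $ r * G (0,1) $ r $ ?u)"
    by (simp add: matrix_matrix_mult_def)
  also have "\<dots> = (\<Sum>r\<in>UNIV. if r = ?u then F (0,1) $ ?u $ ?u * G (0,1) $ ?u $ ?u else 0)"
  proof (rule sum.cong[OF refl])
    fix r assume "r \<in> (UNIV :: ('n \<times> 'n) set)"
    show "F (0,1) $ ?u $ r * G (0,1) $ r $ ?u = (if r = ?u then F (0,1) $ ?u $ ?u * G (0,1) $ ?u $ ?u else 0)"
    proof (cases "r = ?u")
      case False
      hence "?u \<noteq> r" by simp
      thus ?thesis using dd_diag[OF F, of ?u r] False by simp
    qed simp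
  qed
  also have "\<dots> = F (0,1) $ ?u $ ?u * G (0,1) $ ?u $ ?u" by simp
  finally show ?thesis by (simp add: psi0_def)
qed

lemma msmult_neg1: "msmult (-1) M = - (M :: complex^'n::finite^'n)"
  by (simp add: msmult_def vec_eq_iff)

lemma DnDn_simps:
  "cs_carrier DnDn = DnDn_set"
  "cs_add DnDn = (\<lambda>f g x. f x + g x)"
  "cs_mult DnDn = (\<lambda>f g x. f x ** g x)"
  "cs_smult DnDn = (\<lambda>c f x. msmult c (f x))"
  "cs_zero DnDn = (\<lambda>_. 0)"
  by (simp_all add: DnDn_def mfun_alg_def)

lemma Dn_simps:
  "cs_carrier Dn = Dn_set"
  "cs_add Dn = (\<lambda>f g x. f x + g x)"
  "cs_mult Dn = (\<lambda>f g x. f x ** g x)"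
  by (simp_all add: Dn_def mfun_alg_def)

lemma path_simps:
  "cs_add (path_alg B) = (\<lambda>s r t. cs_add B (s t) (r t))"
  "cs_mult (path_alg B) = (\<lambda>s r t. cs_mult B (s t) (r t))"
  by (simp_all add: path_alg_def)

lemma path_carrier:
  assumes "s \<in> cs_carrier (path_alg B)"
  shows "\<And>t. t \<in> {0..1} \<Longrightarrow> s t \<in> cs_carrier B"
    and "\<And>t e. t \<in> {0..1} \<Longrightarrow> e > 0 \<Longrightarrow> \<exists>d>0. \<forall>u\<in>{0..1}. \<bar>u - t\<bar> < d \<longrightarrow> cs_norm B (cs_sub B (s u) (s t)) < e"
  using assms by (auto simp: path_alg_def)

theorem mainTheorem18:
  fixes m :: nat
    and B :: "nat \<Rightarrow> 'b cstar"
    and q :: "nat \<Rightarrow> (real \<times> real \<Rightarrow> complex^('n::finite\<times>'n)^('n\<times>'n)) \<Rightarrow> 'b"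
    and \<sigma> :: "nat \<Rightarrow> (real \<Rightarrow> complex^'n^'n) \<Rightarrow> real \<Rightarrow> 'b"
  assumes "CARD('n) > 1"
  shows "\<not> TC_data (Dn :: (real \<Rightarrow> complex^'n^'n) cstar) DnDn p0 p1 m B q \<sigma>"
proof
  note card = assms
  assume TC: "TC_data (Dn :: (real \<Rightarrow> complex^'n^'n) cstar) DnDn p0 p1 m B q \<sigma>"
  have Bi: "is_cstar_algebra (B i)" if "i < m" for i using TC that unfolding TC_data_def by blast
  have qhom: "is_star_hom (DnDn :: (real \<times> real \<Rightarrow> complex^('n\<times>'n)^('n\<times>'n)) cstar) (B i) (q i)"
    if "i < m" for i using TC that unfolding TC_data_def by blast
  have qsurj: "q i ` DnDn_set = cs_carrier (B i)" if "i < m" for i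
    using TC that unfolding TC_data_def DnDn_simps by blast
  have shom: "is_star_hom (Dn :: (real \<Rightarrow> complex^'n^'n) cstar) (path_alg (B i)) (\<sigma> i)"
    if "i < m" for i using TC that unfolding TC_data_def by blast
  have ends: "\<sigma> i a 0 = q i (p0 a) \<and> \<sigma> i a 1 = q i (p1 a)" if "i < m" "a \<in> Dn_set" for i a
    using TC that unfolding TC_data_def Dn_simps by blast
  have faith: "F = (\<lambda>_. 0)" if "F \<in> DnDn_set" "\<forall>i<m. q i F = cs_zero (B i)" for F
    using TC that unfolding TC_data_def DnDn_simps by blast
  have qin: "q i F \<in> cs_carrier (B i)" if "i < m" "F \<in> DnDn_set" for i F
    using qhom[OF that(1)] that(2) unfolding is_star_hom_def DnDn_simps by blast
  have qadd: "q i (\<lambda>x. F x + G x) = cs_add (B i) (q i F) (q i G)"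
    if "i < m" "F \<in> DnDn_set" "G \<in> DnDn_set" for i F G
    using qhom[OF that(1)] that(2,3) unfolding is_star_hom_def DnDn_simps by blast
  have qmul: "q i (\<lambda>x. F x ** G x) = cs_mult (B i) (q i F) (q i G)"
    if "i < m" "F \<in> DnDn_set" "G \<in> DnDn_set" for i F G
    using qhom[OF that(1)] that(2,3) unfolding is_star_hom_def DnDn_simps by blast
  have qneg: "q i (\<lambda>x. - F x) = cs_smult (B i) (-1) (q i F)"
    if "i < m" "F \<in> DnDn_set" for i F
  proof -
    have "q i (\<lambda>x. msmult (-1) (F x)) = cs_smult (B i) (-1) (q i F)"
      using qhom[OF that(1)] that(2) unfolding is_star_hom_def DnDn_simps by blast
    thus ?thesis by (simp add: msmult_neg1)
  qed
  have "\<exists>i<m. \<forall>F\<in>DnDn_set. q i F = cs_zero (B i) \<longrightarrow> psi0 F = 0"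
  proof (rule ccontr)
    assume "\<not> (\<exists>i<m. \<forall>F\<in>DnDn_set. q i F = cs_zero (B i) \<longrightarrow> psi0 F = 0)"
    hence "\<forall>i. \<exists>F. i < m \<longrightarrow> F \<in> DnDn_set \<and> q i F = cs_zero (B i) \<and> psi0 F \<noteq> 0" by blast
    from choice[OF this] obtain Fc where Fc: "\<And>i. i < m \<Longrightarrow> Fc i \<in> DnDn_set \<and> q i (Fc i) = cs_zero (B i) \<and> psi0 (Fc i) \<noteq> 0"
      by blast
    define G where "G = rec_nat (p0 u1) (\<lambda>k Gk. (\<lambda>x. Gk x ** Fc k x))"
    have G0: "G 0 = p0 u1" and GS: "\<And>k. G (Suc k) = (\<lambda>x. G k x ** Fc k x)" by (simp_all add: G_def)
    have Gk: "k \<le> m \<Longrightarrow> G k \<in> DnDn_set \<and> (\<forall>j<k. q j (G k) = cs_zero (B j)) \<and> psi0 (G k) \<noteq> 0" for k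
    proof (induction k)
      case 0
      have "psi0 (p0 (u1 :: real \<Rightarrow> complex^'n^'n)) = 1"
        by (simp add: psi0_def p0_def u1_def kron_mat_diag)
      thus ?case using dd_p0[OF dn_u1] by (simp add: G0)
    next
      case (Suc k)
      hence k: "k < m" and IH: "G k \<in> DnDn_set" "\<forall>j<k. q j (G k) = cs_zero (B j)" "psi0 (G k) \<noteq> 0" by auto
      have Fk: "Fc k \<in> DnDn_set" "q k (Fc k) = cs_zero (B k)" "psi0 (Fc k) \<noteq> 0" using Fc[OF k] by auto
      have "G (Suc k) \<in> DnDn_set" unfolding GS by (rule dd_mult[OF IH(1) Fk(1)])
      moreover have "q j (G (Suc k)) = cs_zero (B j)" if j: "j < Suc k" for j
      proof -
        have jm: "j < m" using j k by simp
        interpret Bj: csa "B j" using Bi[OF jm] by (simp add: csa_def)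
        have e: "q j (G (Suc k)) = cs_mult (B j) (q j (G k)) (q j (Fc k))"
          unfolding GS by (rule qmul[OF jm IH(1) Fk(1)])
        show ?thesis
        proof (cases "j < k")
          case True
          thus ?thesis using e IH(2) Bj.mul_zero_l[OF qin[OF jm Fk(1)]] by simp
        next
          case False
          hence "j = k" using j by simp
          thus ?thesis using e Fk(2) Bj.mul_zero_r[OF qin[OF jm IH(1)]] by simp
        qed
      qed
      moreover have "psi0 (G (Suc k)) \<noteq> 0" unfolding GS using psi0_mult[OF IH(1)] IH(3) Fk(3) by simp
      ultimately show ?case by blast
    qed
    have "G m = (\<lambda>_. 0)" using Gk[of m] faith by blast
    thus False using Gk[of m] by (simp add: psi0_def)
  qed
  then obtain i where i: "i < m" and ker: "\<And>F. F \<in> DnDn_set \<Longrightarrow> q i F = cs_zero (B i) \<Longrightarrow> psi0 F = 0"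
    by blast
  interpret csa "B i" using Bi[OF i] by (simp add: csa_def)
  define \<psi> where "\<psi> b = psi0 (SOME F. F \<in> DnDn_set \<and> q i F = b)" for b
  have psiq: "\<psi> (q i F) = psi0 F" if F: "F \<in> DnDn_set" for F
  proof -
    define F' where "F' = (SOME F'. F' \<in> DnDn_set \<and> q i F' = q i F)"
    have F': "F' \<in> DnDn_set \<and> q i F' = q i F" unfolding F'_def by (rule someI[of _ F]) (simp add: F)
    have nF': "(\<lambda>x. - F' x) \<in> DnDn_set" using dd_neg F' by blast
    have H: "(\<lambda>x. F x + - F' x) \<in> DnDn_set" by (rule dd_add[OF F nF'])
    have "q i (\<lambda>x. F x + - F' x) = cs_add (B i) (q i F) (q i (\<lambda>x. - F' x))"
      by (rule qadd[OF i F nF'])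
    also have "\<dots> = cs_add (B i) (q i F) (cs_smult (B i) (-1) (q i F))"
      using qneg[OF i] F' by simp
    also have "\<dots> = cs_zero (B i)" by (rule add_neg[OF qin[OF i F]])
    finally have "psi0 (\<lambda>x. F x + - F' x) = 0" using ker[OF H] by simp
    hence "psi0 F = psi0 F'" by (simp add: psi0_def)
    thus ?thesis by (simp add: \<psi>_def F'_def)
  qed
  have surj: "\<exists>F. F \<in> DnDn_set \<and> q i F = b" if "b \<in> cs_carrier (B i)" for b
  proof -
    have "b \<in> q i ` DnDn_set" using that qsurj[OF i] by simp
    then obtain F where "F \<in> DnDn_set" "b = q i F" by (rule imageE)
    thus ?thesis by blast
  qed
  have padd: "\<psi> (cs_add (B i) x y) = \<psi> x + \<psi> y" if xy: "x \<in> cs_carrier (B i)" "y \<in> cs_carrier (B i)" for x y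
  proof -
    obtain F where F: "F \<in> DnDn_set" "q i F = x" using surj[OF xy(1)] by blast
    obtain G where G: "G \<in> DnDn_set" "q i G = y" using surj[OF xy(2)] by blast
    have "\<psi> (cs_add (B i) x y) = \<psi> (q i (\<lambda>t. F t + G t))" using qadd[OF i F(1) G(1)] F G by simp
    also have "\<dots> = psi0 (\<lambda>t. F t + G t)" by (rule psiq[OF dd_add[OF F(1) G(1)]])
    finally show ?thesis using psiq[OF F(1)] psiq[OF G(1)] F(2) G(2) by (simp add: psi0_def)
  qed
  have pmul: "\<psi> (cs_mult (B i) x y) = \<psi> x * \<psi> y" if xy: "x \<in> cs_carrier (B i)" "y \<in> cs_carrier (B i)" for x y
  proof -
    obtain F where F: "F \<in> DnDn_set" "q i F = x" using surj[OF xy(1)] by blast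
    obtain G where G: "G \<in> DnDn_set" "q i G = y" using surj[OF xy(2)] by blast
    have "\<psi> (cs_mult (B i) x y) = \<psi> (q i (\<lambda>t. F t ** G t))" using qmul[OF i F(1) G(1)] F G by simp
    also have "\<dots> = psi0 (\<lambda>t. F t ** G t)" by (rule psiq[OF dd_mult[OF F(1) G(1)]])
    finally show ?thesis using psiq[OF F(1)] psiq[OF G(1)] F(2) G(2) psi0_mult[OF F(1)] by simp
  qed
  have pneg: "\<psi> (cs_smult (B i) (-1) x) = - \<psi> x" if xy: "x \<in> cs_carrier (B i)" for x
  proof -
    obtain F where F: "F \<in> DnDn_set" "q i F = x" using surj[OF xy] by blast
    have "\<psi> (cs_smult (B i) (-1) x) = \<psi> (q i (\<lambda>t. - F t))" using qneg[OF i F(1)] F by simp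
    also have "\<dots> = psi0 (\<lambda>t. - F t)" by (rule psiq[OF dd_neg[OF F(1)]])
    finally show ?thesis using psiq[OF F(1)] F(2) by (simp add: psi0_def)
  qed
  have sig: "\<sigma> i a \<in> cs_carrier (path_alg (B i))" if "a \<in> Dn_set" for a
    using shom[OF i] that unfolding is_star_hom_def Dn_simps by blast
  have sigadd: "\<sigma> i (\<lambda>x. a x + b x) t = cs_add (B i) (\<sigma> i a t) (\<sigma> i b t)" if "a \<in> Dn_set" "b \<in> Dn_set" for a b t
  proof -
    have "\<sigma> i (\<lambda>x. a x + b x) = cs_add (path_alg (B i)) (\<sigma> i a) (\<sigma> i b)"
      using shom[OF i] that unfolding is_star_hom_def Dn_simps by blast
    thus ?thesis by (simp add: path_simps)
  qed
  have sigmul: "\<sigma> i (\<lambda>x. a x ** b x) t = cs_mult (B i) (\<sigma> i a t) (\<sigma> i b t)" if "a \<in> Dn_set" "b \<in> Dn_set" for a b t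
  proof -
    have "\<sigma> i (\<lambda>x. a x ** b x) = cs_mult (path_alg (B i)) (\<sigma> i a) (\<sigma> i b)"
      using shom[OF i] that unfolding is_star_hom_def Dn_simps by blast
    thus ?thesis by (simp add: path_simps)
  qed
  have phi01: "\<psi> (\<sigma> i hh \<tau>) = 0 \<or> \<psi> (\<sigma> i hh \<tau>) = 1" if tau: "\<tau> \<in> {0..1}" for \<tau>
  proof -
    have "(\<lambda>a. \<psi> (\<sigma> i a \<tau>)) hh = 0 \<or> (\<lambda>a. \<psi> (\<sigma> i a \<tau>)) hh = 1"
    proof (rule char_Dn[OF card])
      fix a b :: "real \<Rightarrow> complex^'n^'n" assume ab: "a \<in> Dn_set" "b \<in> Dn_set"
      show "\<psi> (\<sigma> i (\<lambda>x. a x + b x) \<tau>) = \<psi> (\<sigma> i a \<tau>) + \<psi> (\<sigma> i b \<tau>)"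
        using sigadd[OF ab] padd path_carrier(1)[OF sig[OF ab(1)] tau] path_carrier(1)[OF sig[OF ab(2)] tau] by simp
      show "\<psi> (\<sigma> i (\<lambda>x. a x ** b x) \<tau>) = \<psi> (\<sigma> i a \<tau>) * \<psi> (\<sigma> i b \<tau>)"
        using sigmul[OF ab] pmul path_carrier(1)[OF sig[OF ab(1)] tau] path_carrier(1)[OF sig[OF ab(2)] tau] by simp
    qed
    thus ?thesis by simp
  qed
  have v0: "\<psi> (\<sigma> i hh 0) = 0"
  proof -
    have "\<psi> (\<sigma> i hh 0) = psi0 (p0 (hh :: real \<Rightarrow> complex^'n^'n))"
      using ends[OF i hh_in] psiq[OF dd_p0[OF hh_in]] by simp
    also have "\<dots> = 0" by (simp add: psi0_def p0_def hh_def kron_zero)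
    finally show ?thesis .
  qed
  have v1: "\<psi> (\<sigma> i hh 1) = 1"
  proof -
    have "\<psi> (\<sigma> i hh 1) = psi0 (p1 (hh :: real \<Rightarrow> complex^'n^'n))"
      using ends[OF i hh_in] psiq[OF dd_p1[OF hh_in]] by simp
    also have "\<dots> = 1" by (simp add: psi0_def p1_def hh_def kron_mat_diag)
    finally show ?thesis .
  qed
  have loc: "\<exists>d>0. \<forall>u\<in>{0..1}. \<bar>u - \<tau>\<bar> < d \<longrightarrow> \<psi> (\<sigma> i hh u) = \<psi> (\<sigma> i hh \<tau>)" if tau: "\<tau> \<in> {0..1}" for \<tau>
  proof -
    obtain d where d: "d > 0" "\<forall>u\<in>{0..1}. \<bar>u - \<tau>\<bar> < d \<longrightarrow> cs_norm (B i) (cs_sub (B i) (\<sigma> i hh u) (\<sigma> i hh \<tau>)) < 1"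
      using path_carrier(2)[OF sig[OF hh_in] tau, of 1] by auto
    have "\<psi> (\<sigma> i hh u) = \<psi> (\<sigma> i hh \<tau>)" if u: "u \<in> {0..1}" "\<bar>u - \<tau>\<bar> < d" for u
    proof (rule ccontr)
      assume ne: "\<psi> (\<sigma> i hh u) \<noteq> \<psi> (\<sigma> i hh \<tau>)"
      have su: "\<sigma> i hh u \<in> cs_carrier (B i)" by (rule path_carrier(1)[OF sig[OF hh_in] u(1)])
      have st: "\<sigma> i hh \<tau> \<in> cs_carrier (B i)" by (rule path_carrier(1)[OF sig[OF hh_in] tau])
      define c where "c = cs_sub (B i) (\<sigma> i hh u) (\<sigma> i hh \<tau>)"
      have c: "c \<in> cs_carrier (B i)" unfolding c_def by (rule sb_in[OF su st])
      have nc: "cs_norm (B i) c < 1" using d(2) u unfolding c_def by blast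
      have pc: "\<psi> c = \<psi> (\<sigma> i hh u) - \<psi> (\<sigma> i hh \<tau>)"
        unfolding c_def sb using padd[OF su ax(4)[OF st]] pneg[OF st] by simp
      have "\<psi> c = 1 \<or> \<psi> c = -1" using pc ne phi01[OF u(1)] phi01[OF tau] by auto
      thus False
      proof
        assume "\<psi> c = 1"
        show False by (rule neumann[where \<psi>=\<psi> and x=c, OF padd pmul pneg c nc \<open>\<psi> c = 1\<close>])
      next
        assume m1: "\<psi> c = -1"
        have c': "cs_smult (B i) (-1) c \<in> cs_carrier (B i)" by (rule ax(4)[OF c])
        have "cs_norm (B i) (cs_smult (B i) (-1) c) = cs_norm (B i) c" using ax(19)[OF c, of "-1"] by simp
        hence nc': "cs_norm (B i) (cs_smult (B i) (-1) c) < 1" using nc by simp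
        have p1: "\<psi> (cs_smult (B i) (-1) c) = 1" using pneg[OF c] m1 by simp
        show False by (rule neumann[where \<psi>=\<psi> and x="cs_smult (B i) (-1) c", OF padd pmul pneg c' nc' p1])
      qed
    qed
    thus ?thesis using d(1) by blast
  qed
  define f where "f \<tau> = Re (\<psi> (\<sigma> i hh \<tau>))" for \<tau>
  have fc: "continuous_on {0..1} f"
    unfolding continuous_on_iff
  proof (intro ballI allI impI)
    fix x e :: real assume x: "x \<in> {0..1}" and e: "e > 0"
    obtain d where d: "d > 0" "\<forall>u\<in>{0..1}. \<bar>u - x\<bar> < d \<longrightarrow> \<psi> (\<sigma> i hh u) = \<psi> (\<sigma> i hh x)"
      using loc[OF x] by blast
    show "\<exists>d>0. \<forall>x'\<in>{0..1}. dist x' x < d \<longrightarrow> dist (f x') (f x) < e"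
      using d e by (intro exI[of _ d]) (auto simp: f_def dist_real_def)
  qed
  have h1: "f 0 \<le> 1/2" and h2: "1/2 \<le> f 1" using v0 v1 by (simp_all add: f_def)
  have "\<exists>x\<ge>0. x \<le> 1 \<and> f x = 1/2" by (rule IVT'[OF h1 h2 _ fc]) simp
  then obtain x where x: "0 \<le> x" "x \<le> 1" "f x = 1/2" by blast
  thus False using phi01[of x] by (auto simp: f_def)
qed

end
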